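(* Let $\pi$ be a positive continuous probability density on $\mathbb{R}$ and $q:\mathbb{R}^2\to[0,\infty)$ a bounded continuous function with $q(x,\cdot)$ a probability density for each $x$ and, for some $s>0$, $q(x,x+u)=0$ whenever $|u|>s$. Let $a>0$ and let $P=R+T$ be the Metropolis–Hastings operator on $L^2(\pi)$. Then for every $n\ge1$ there exists a compact operator $K_n$ on $L^2(\pi)$ such that $$P^n=K_n+R_a^n+(R_{a^c}+T_{a^c})^n.$$
   Context: $L^2(\pi)$ is the $L^2$ space of the probability measure $\pi(y)dy$. Set $t(x,y):=\min(q(x,y),\pi(y)q(y,x)/\pi(x))$, $r(x):=1-\int_{\mathbb{R}}t(x,y)\,dy$, $(Tf)(x):=\int_{\mathbb{R}}f(y)t(x,y)\,dy$, $(Rf)(x):=r(x)f(x)$, and $P:=R+T$. For a bounded operator $U$ on $L^2(\pi)$ define $U_af:=1_{[-a,a]}\cdot Uf$ and $U_{a^c}f:=1_{\mathbb{R}\setminus[-a,a]}\cdot Uf$. *)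

theory Defs
  imports "HOL-Analysis.Analysis"
begin

definition mh_t :: "(real \<Rightarrow> real) \<Rightarrow> (real \<Rightarrow> real \<Rightarrow> real) \<Rightarrow> real \<Rightarrow> real \<Rightarrow> real" where
  "mh_t \<pi> q x y = min (q x y) (\<pi> y * q y x / \<pi> x)"

definition mh_r :: "(real \<Rightarrow> real) \<Rightarrow> (real \<Rightarrow> real \<Rightarrow> real) \<Rightarrow> real \<Rightarrow> real" where
  "mh_r \<pi> q x = 1 - (LINT y|lborel. mh_t \<pi> q x y)"

definition mh_T :: "(real \<Rightarrow> real) \<Rightarrow> (real \<Rightarrow> real \<Rightarrow> real) \<Rightarrow> (real \<Rightarrow> real) \<Rightarrow> real \<Rightarrow> real" where
  "mh_T \<pi> q f x = (LINT y|lborel. f y * mh_t \<pi> q x y)"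

definition mh_R :: "(real \<Rightarrow> real) \<Rightarrow> (real \<Rightarrow> real \<Rightarrow> real) \<Rightarrow> (real \<Rightarrow> real) \<Rightarrow> real \<Rightarrow> real" where
  "mh_R \<pi> q f x = mh_r \<pi> q x * f x"

definition mh_P :: "(real \<Rightarrow> real) \<Rightarrow> (real \<Rightarrow> real \<Rightarrow> real) \<Rightarrow> (real \<Rightarrow> real) \<Rightarrow> real \<Rightarrow> real" where
  "mh_P \<pi> q f x = mh_R \<pi> q f x + mh_T \<pi> q f x"

definition restr_in :: "real \<Rightarrow> ((real \<Rightarrow> real) \<Rightarrow> real \<Rightarrow> real) \<Rightarrow> (real \<Rightarrow> real) \<Rightarrow> real \<Rightarrow> real" where
  "restr_in a U f x = indicator {-a..a} x * U f x"

definition restr_out :: "real \<Rightarrow> ((real \<Rightarrow> real) \<Rightarrow> real \<Rightarrow> real) \<Rightarrow> (real \<Rightarrow> real) \<Rightarrow> real \<Rightarrow> real" where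
  "restr_out a U f x = indicator (UNIV - {-a..a}) x * U f x"

definition piM :: "(real \<Rightarrow> real) \<Rightarrow> real measure" where
  "piM \<pi> = density lborel (\<lambda>x. ennreal (\<pi> x))"

definition L2 :: "(real \<Rightarrow> real) \<Rightarrow> (real \<Rightarrow> real) \<Rightarrow> bool" where
  "L2 \<pi> f \<longleftrightarrow> f \<in> borel_measurable lborel \<and> integrable (piM \<pi>) (\<lambda>x. (f x)\<^sup>2)"

definition L2norm :: "(real \<Rightarrow> real) \<Rightarrow> (real \<Rightarrow> real) \<Rightarrow> real" where
  "L2norm \<pi> f = sqrt (LINT x|piM \<pi>. (f x)\<^sup>2)"

definition bounded_op_L2 :: "(real \<Rightarrow> real) \<Rightarrow> ((real \<Rightarrow> real) \<Rightarrow> real \<Rightarrow> real) \<Rightarrow> bool" where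
  "bounded_op_L2 \<pi> K \<longleftrightarrow>
     (\<forall>f. L2 \<pi> f \<longrightarrow> L2 \<pi> (K f)) \<and>
     (\<forall>f g c. L2 \<pi> f \<and> L2 \<pi> g \<longrightarrow>
        (AE x in piM \<pi>. K (\<lambda>y. c * f y + g y) x = c * K f x + K g x)) \<and>
     (\<exists>C. \<forall>f. L2 \<pi> f \<longrightarrow> L2norm \<pi> (K f) \<le> C * L2norm \<pi> f)"

text \<open>Compact operator: bounded linear, and the image of every bounded sequence has an
  L^2-Cauchy (hence, by completeness of L^2, convergent) subsequence.\<close>
definition compact_op_L2 :: "(real \<Rightarrow> real) \<Rightarrow> ((real \<Rightarrow> real) \<Rightarrow> real \<Rightarrow> real) \<Rightarrow> bool" where
  "compact_op_L2 \<pi> K \<longleftrightarrow> bounded_op_L2 \<pi> K \<and>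
     (\<forall>(F :: nat \<Rightarrow> real \<Rightarrow> real) (B::real). (\<forall>k. L2 \<pi> (F k) \<and> L2norm \<pi> (F k) \<le> B) \<longrightarrow>
        (\<exists>r. strict_mono r \<and>
           (\<forall>e::real>0. \<exists>N::nat. \<forall>m\<ge>N. \<forall>k\<ge>N. L2norm \<pi> (\<lambda>x. K (F (r m)) x - K (F (r k)) x) < e)))"

end

theory Submission
  imports Defs "HOL-Library.Diagonal_Subsequence"
begin
definition L2M :: "'a measure \<Rightarrow> ('a \<Rightarrow> real) \<Rightarrow> bool" where
  "L2M M f \<longleftrightarrow> f \<in> borel_measurable M \<and> integrable M (\<lambda>x. (f x)\<^sup>2)"

definition nM :: "'a measure \<Rightarrow> ('a \<Rightarrow> real) \<Rightarrow> real" where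
  "nM M f = sqrt (\<integral>x. (f x)\<^sup>2 \<partial>M)"

lemma quad_disc:
  fixes A B C :: real
  assumes "\<And>t. 0 \<le> t\<^sup>2 * A + 2 * t * C + B" "A \<ge> 0"
  shows "C\<^sup>2 \<le> A * B"
proof (cases "A = 0")
  case True
  show ?thesis
  proof (rule ccontr)
    assume "\<not> ?thesis"
    then have "C \<noteq> 0" using True by simp
    have "0 \<le> (-(\<bar>B\<bar>+1)/(2*C))\<^sup>2 * A + 2 * (-(\<bar>B\<bar>+1)/(2*C)) * C + B" by (rule assms(1))
    also have "\<dots> = -(\<bar>B\<bar>+1) + B" using True \<open>C \<noteq> 0\<close> by (simp add: field_simps)
    finally show False by linarith
  qed
next
  case False
  then have A: "A > 0" using assms(2) by simp
  have "0 \<le> (-C/A)\<^sup>2 * A + 2 * (-C/A) * C + B" by (rule assms(1))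
  also have "\<dots> = B - C\<^sup>2/A" using A by (simp add: field_simps power2_eq_square)
  finally have "C\<^sup>2/A \<le> B" by simp
  then show ?thesis using A by (simp add: field_simps mult.commute)
qed

lemma L2M_meas: "L2M M f \<Longrightarrow> f \<in> borel_measurable M" by (simp add: L2M_def)
lemma L2M_sq_int: "L2M M f \<Longrightarrow> integrable M (\<lambda>x. (f x)\<^sup>2)" by (simp add: L2M_def)

lemma L2M_prod_int:
  assumes "L2M M f" "L2M M g"
  shows "integrable M (\<lambda>x. f x * g x)"
proof (rule Bochner_Integration.integrable_bound[where f="\<lambda>x. ((f x)\<^sup>2 + (g x)\<^sup>2)::real"])
  show "integrable M (\<lambda>x. ((f x)\<^sup>2 + (g x)\<^sup>2))" using assms by (auto simp: L2M_def)
  show "(\<lambda>x. f x * g x) \<in> borel_measurable M" using assms by (auto simp: L2M_def)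
  show "AE x in M. norm (f x * g x) \<le> norm ((f x)\<^sup>2 + (g x)\<^sup>2)"
  proof (intro AE_I2)
    fix x
    have "2 * \<bar>f x\<bar> * \<bar>g x\<bar> \<le> (f x)\<^sup>2 + (g x)\<^sup>2"
      using sum_squares_bound[of "\<bar>f x\<bar>" "\<bar>g x\<bar>"] by (simp add: power2_abs)
    moreover have "\<bar>f x\<bar> * \<bar>g x\<bar> \<le> 2 * \<bar>f x\<bar> * \<bar>g x\<bar>" by simp
    moreover have "0 \<le> \<bar>f x\<bar> * \<bar>g x\<bar>" by simp
    moreover have "norm (f x * g x) = \<bar>f x\<bar> * \<bar>g x\<bar>" by (simp add: abs_mult)
    moreover have "norm ((f x)\<^sup>2 + (g x)\<^sup>2) = (f x)\<^sup>2 + (g x)\<^sup>2" by simp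
    ultimately show "norm (f x * g x) \<le> norm ((f x)\<^sup>2 + (g x)\<^sup>2)"
      by linarith
  qed
qed

lemma L2M_lin:
  assumes "L2M M f" "L2M M g"
  shows "L2M M (\<lambda>x. c * f x + g x)"
proof -
  have "integrable M (\<lambda>x. c\<^sup>2 * (f x)\<^sup>2 + 2 * c * (f x * g x) + (g x)\<^sup>2)"
    using assms L2M_prod_int[OF assms] by (auto simp: L2M_def)
  moreover have "(\<lambda>x. (c * f x + g x)\<^sup>2) = (\<lambda>x. c\<^sup>2 * (f x)\<^sup>2 + 2 * c * (f x * g x) + (g x)\<^sup>2)"
    by (auto simp: power2_eq_square algebra_simps)
  ultimately show ?thesis using assms by (auto simp: L2M_def)
qed

lemma L2M_add: "L2M M f \<Longrightarrow> L2M M g \<Longrightarrow> L2M M (\<lambda>x. f x + g x)"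
  using L2M_lin[of M f g 1] by simp
lemma L2M_cmult: "L2M M f \<Longrightarrow> L2M M (\<lambda>x. c * f x)"
proof -
  assume f: "L2M M f"
  have "L2M M (\<lambda>x. 0::real)" by (simp add: L2M_def)
  from L2M_lin[OF f this, of c] show ?thesis by simp
qed
lemma L2M_diff: "L2M M f \<Longrightarrow> L2M M g \<Longrightarrow> L2M M (\<lambda>x. f x - g x)"
  using L2M_lin[of M g f "-1"] by simp

lemma nM_nonneg: "nM M f \<ge> 0" by (simp add: nM_def)

lemma nM_sq: "nM M f ^ 2 = (\<integral>x. (f x)\<^sup>2 \<partial>M)"
  by (simp add: nM_def)

lemma CS_int:
  assumes "L2M M f" "L2M M g"
  shows "(\<integral>x. f x * g x \<partial>M)\<^sup>2 \<le> (\<integral>x. (f x)\<^sup>2 \<partial>M) * (\<integral>x. (g x)\<^sup>2 \<partial>M)"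
proof (rule quad_disc)
  fix t :: real
  have i1: "integrable M (\<lambda>x. (f x)\<^sup>2)" "integrable M (\<lambda>x. (g x)\<^sup>2)" "integrable M (\<lambda>x. f x * g x)"
    using assms L2M_prod_int[OF assms] by (auto simp: L2M_def)
  have "0 \<le> (\<integral>x. (t * f x + g x)\<^sup>2 \<partial>M)" by simp
  also have "(\<integral>x. (t * f x + g x)\<^sup>2 \<partial>M) = (\<integral>x. t\<^sup>2 * (f x)\<^sup>2 + 2 * t * (f x * g x) + (g x)\<^sup>2 \<partial>M)"
    by (rule Bochner_Integration.integral_cong) (auto simp: power2_eq_square algebra_simps)
  also have "\<dots> = t\<^sup>2 * (\<integral>x. (f x)\<^sup>2 \<partial>M) + 2 * t * (\<integral>x. f x * g x \<partial>M) + (\<integral>x. (g x)\<^sup>2 \<partial>M)"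
    using i1 by simp
  finally show "0 \<le> t\<^sup>2 * (\<integral>x. (f x)\<^sup>2 \<partial>M) + 2 * t * (\<integral>x. f x * g x \<partial>M) + (\<integral>x. (g x)\<^sup>2 \<partial>M)" .
  show "0 \<le> (\<integral>x. (f x)\<^sup>2 \<partial>M)" by simp
qed

lemma CS_nM:
  assumes "L2M M f" "L2M M g"
  shows "\<bar>\<integral>x. f x * g x \<partial>M\<bar> \<le> nM M f * nM M g"
proof -
  have "\<bar>\<integral>x. f x * g x \<partial>M\<bar> = sqrt ((\<integral>x. f x * g x \<partial>M)\<^sup>2)" by simp
  also have "\<dots> \<le> sqrt ((\<integral>x. (f x)\<^sup>2 \<partial>M) * (\<integral>x. (g x)\<^sup>2 \<partial>M))"
    using CS_int[OF assms] by (rule real_sqrt_le_mono)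
  also have "\<dots> = nM M f * nM M g" by (simp add: nM_def real_sqrt_mult)
  finally show ?thesis .
qed

lemma nM_tri:
  assumes "L2M M f" "L2M M g"
  shows "nM M (\<lambda>x. f x + g x) \<le> nM M f + nM M g"
proof -
  have i1: "integrable M (\<lambda>x. (f x)\<^sup>2)" "integrable M (\<lambda>x. (g x)\<^sup>2)" "integrable M (\<lambda>x. f x * g x)"
    using assms L2M_prod_int[OF assms] by (auto simp: L2M_def)
  have "(\<integral>x. (f x + g x)\<^sup>2 \<partial>M) = (\<integral>x. (f x)\<^sup>2 + 2 * (f x * g x) + (g x)\<^sup>2 \<partial>M)"
    by (rule Bochner_Integration.integral_cong) (auto simp: power2_eq_square algebra_simps)
  also have "\<dots> = (\<integral>x. (f x)\<^sup>2 \<partial>M) + 2 * (\<integral>x. f x * g x \<partial>M) + (\<integral>x. (g x)\<^sup>2 \<partial>M)"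
    using i1 by simp
  also have "\<dots> \<le> (nM M f)\<^sup>2 + 2 * (nM M f * nM M g) + (nM M g)\<^sup>2"
    using CS_nM[OF assms] by (simp add: nM_sq)
  also have "\<dots> = (nM M f + nM M g)\<^sup>2" by (simp add: power2_eq_square algebra_simps)
  finally have "(nM M (\<lambda>x. f x + g x))\<^sup>2 \<le> (nM M f + nM M g)\<^sup>2" by (simp add: nM_sq)
  then show ?thesis using nM_nonneg[of M f] nM_nonneg[of M g]
    by (meson add_nonneg_nonneg power2_le_imp_le)
qed

lemma nM_cmult: "nM M (\<lambda>x. c * f x) = \<bar>c\<bar> * nM M f"
proof -
  have "(\<integral>x. (c * f x)\<^sup>2 \<partial>M) = c\<^sup>2 * (\<integral>x. (f x)\<^sup>2 \<partial>M)"
    by (simp add: power_mult_distrib)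
  then show ?thesis by (simp add: nM_def real_sqrt_mult)
qed

lemma nM_cong_AE:
  assumes "f \<in> borel_measurable M" "g \<in> borel_measurable M" "AE x in M. f x = g x"
  shows "nM M f = nM M g"
proof -
  have "AE x in M. (f x)\<^sup>2 = (g x)\<^sup>2" using assms(3) by eventually_elim simp
  then have "(\<integral>x. (f x)\<^sup>2 \<partial>M) = (\<integral>x. (g x)\<^sup>2 \<partial>M)" using assms(1,2) by (intro integral_cong_AE) auto
  then show ?thesis by (simp add: nM_def)
qed

lemma nM_zero_AE:
  assumes "L2M M f" "nM M f = 0"
  shows "AE x in M. f x = 0"
proof -
  have "(\<integral>x. (f x)\<^sup>2 \<partial>M) = 0" using assms(2) by (simp add: nM_def)
  then have "AE x in M. (f x)\<^sup>2 = 0"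
    using integral_nonneg_eq_0_iff_AE[of M "\<lambda>x. (f x)\<^sup>2"] assms(1) by (simp add: L2M_def)
  then show ?thesis by eventually_elim simp
qed

lemma L2M_cong_AE:
  assumes "L2M M f" "g \<in> borel_measurable M" "AE x in M. f x = g x"
  shows "L2M M g"
proof -
  have "AE x in M. (f x)\<^sup>2 = (g x)\<^sup>2" using assms(3) by eventually_elim simp
  then have "integrable M (\<lambda>x. (g x)\<^sup>2)"
    using integrable_cong_AE[of "\<lambda>x. (f x)\<^sup>2" M "\<lambda>x. (g x)\<^sup>2"] assms by (auto simp: L2M_def)
  then show ?thesis using assms by (simp add: L2M_def)
qed

lemma L2M_mult_bdd:
  assumes "L2M M f" "h \<in> borel_measurable M" "\<And>x. \<bar>h x\<bar> \<le> B"
  shows "L2M M (\<lambda>x. h x * f x)" "nM M (\<lambda>x. h x * f x) \<le> B * nM M f"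
proof -
  have B: "B \<ge> 0" using assms(3)[of undefined] by linarith
  have le: "(h x * f x)\<^sup>2 \<le> B\<^sup>2 * (f x)\<^sup>2" for x
  proof -
    have "(h x)\<^sup>2 \<le> B\<^sup>2" using assms(3)[of x] by (metis abs_le_square_iff abs_of_nonneg B power2_abs)
    then show ?thesis by (simp add: power_mult_distrib mult_right_mono)
  qed
  have i: "integrable M (\<lambda>x. B\<^sup>2 * (f x)\<^sup>2)" using assms(1) by (simp add: L2M_def)
  have m: "(\<lambda>x. h x * f x) \<in> borel_measurable M" using assms by (auto simp: L2M_def)
  have i2: "integrable M (\<lambda>x. (h x * f x)\<^sup>2)"
    by (rule Bochner_Integration.integrable_bound[OF i]) (use m le in auto)
  then show "L2M M (\<lambda>x. h x * f x)" using m by (simp add: L2M_def)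
  have "(\<integral>x. (h x * f x)\<^sup>2 \<partial>M) \<le> (\<integral>x. B\<^sup>2 * (f x)\<^sup>2 \<partial>M)"
    by (rule integral_mono[OF i2 i]) (rule le)
  then have "(nM M (\<lambda>x. h x * f x))\<^sup>2 \<le> (B * nM M f)\<^sup>2"
    by (simp add: nM_sq power_mult_distrib)
  then show "nM M (\<lambda>x. h x * f x) \<le> B * nM M f"
    using B nM_nonneg by (meson mult_nonneg_nonneg power2_le_imp_le)
qed

lemma meas_piM[simp]: "measurable (piM \<pi>) N = measurable lborel N"
  unfolding piM_def by (rule measurable_cong_sets) auto

lemma L2_eq: "L2 \<pi> f \<longleftrightarrow> L2M (piM \<pi>) f"
  by (simp add: L2_def L2M_def)

lemma L2norm_eq: "L2norm \<pi> f = nM (piM \<pi>) f"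
  by (simp add: L2norm_def nM_def)

lemma bop_unfold:
  "bounded_op_L2 \<pi> K \<longleftrightarrow>
     (\<forall>f. L2M (piM \<pi>) f \<longrightarrow> L2M (piM \<pi>) (K f)) \<and>
     (\<forall>f g c. L2M (piM \<pi>) f \<and> L2M (piM \<pi>) g \<longrightarrow>
        (AE x in piM \<pi>. K (\<lambda>y. c * f y + g y) x = c * K f x + K g x)) \<and>
     (\<exists>C. \<forall>f. L2M (piM \<pi>) f \<longrightarrow> nM (piM \<pi>) (K f) \<le> C * nM (piM \<pi>) f)"
  by (simp add: bounded_op_L2_def L2_eq L2norm_eq)

lemma bopI:
  assumes "\<And>f. L2M (piM \<pi>) f \<Longrightarrow> L2M (piM \<pi>) (K f)"
    and "\<And>f g c. L2M (piM \<pi>) f \<Longrightarrow> L2M (piM \<pi>) g \<Longrightarrow>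
        (AE x in piM \<pi>. K (\<lambda>y. c * f y + g y) x = c * K f x + K g x)"
    and "\<And>f. L2M (piM \<pi>) f \<Longrightarrow> nM (piM \<pi>) (K f) \<le> C * nM (piM \<pi>) f"
  shows "bounded_op_L2 \<pi> K"
  unfolding bop_unfold using assms by blast

lemma bopD1: "bounded_op_L2 \<pi> K \<Longrightarrow> L2M (piM \<pi>) f \<Longrightarrow> L2M (piM \<pi>) (K f)"
  unfolding bop_unfold by blast

lemma bopD2: "bounded_op_L2 \<pi> K \<Longrightarrow> L2M (piM \<pi>) f \<Longrightarrow> L2M (piM \<pi>) g \<Longrightarrow>
        (AE x in piM \<pi>. K (\<lambda>y. c * f y + g y) x = c * K f x + K g x)"
  unfolding bop_unfold by blast

lemma bopD3: 
  assumes "bounded_op_L2 \<pi> K"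
  obtains C where "C > 0" "\<And>f. L2M (piM \<pi>) f \<Longrightarrow> nM (piM \<pi>) (K f) \<le> C * nM (piM \<pi>) f"
proof -
  obtain C where C: "\<And>f. L2M (piM \<pi>) f \<Longrightarrow> nM (piM \<pi>) (K f) \<le> C * nM (piM \<pi>) f"
    using assms unfolding bop_unfold by blast
  show ?thesis
  proof (rule that[of "max C 1"])
    fix f assume f: "L2M (piM \<pi>) f"
    have "C * nM (piM \<pi>) f \<le> max C 1 * nM (piM \<pi>) f"
      by (rule mult_right_mono) (auto simp: nM_nonneg)
    then show "nM (piM \<pi>) (K f) \<le> max C 1 * nM (piM \<pi>) f" using C[OF f] by linarith
  qed simp
qed

lemma bop_cong:
  assumes K: "bounded_op_L2 \<pi> K" and f: "L2M (piM \<pi>) f" and g: "L2M (piM \<pi>) g"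
    and fg: "AE x in piM \<pi>. f x = g x"
  shows "AE x in piM \<pi>. K f x = K g x"
proof -
  define h where "h = (\<lambda>y. (-1) * g y + f y)"
  have h: "L2M (piM \<pi>) h" unfolding h_def by (intro L2M_lin f g)
  have "AE x in piM \<pi>. h x = 0" using fg unfolding h_def by eventually_elim simp
  then have "nM (piM \<pi>) h = nM (piM \<pi>) (\<lambda>x. 0)"
    using h by (intro nM_cong_AE) (auto simp: L2M_def)
  then have h0: "nM (piM \<pi>) h = 0" by (simp add: nM_def)
  obtain C where "C > 0" and C: "\<And>f. L2M (piM \<pi>) f \<Longrightarrow> nM (piM \<pi>) (K f) \<le> C * nM (piM \<pi>) f"
    using bopD3[OF K] by blast
  have "nM (piM \<pi>) (K h) = 0" using C[OF h] h0 nM_nonneg[of "piM \<pi>" "K h"] by simp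
  then have "AE x in piM \<pi>. K h x = 0" by (intro nM_zero_AE bopD1[OF K h])
  moreover have "AE x in piM \<pi>. K h x = (-1) * K g x + K f x"
    unfolding h_def by (rule bopD2[OF K g f])
  ultimately show ?thesis by eventually_elim simp
qed

lemma bop_comp:
  assumes K: "bounded_op_L2 \<pi> K" and B: "bounded_op_L2 \<pi> B"
  shows "bounded_op_L2 \<pi> (\<lambda>f. K (B f))"
proof -
  obtain C1 where "C1 > 0" and C1: "\<And>f. L2M (piM \<pi>) f \<Longrightarrow> nM (piM \<pi>) (K f) \<le> C1 * nM (piM \<pi>) f"
    using bopD3[OF K] by blast
  obtain C2 where "C2 > 0" and C2: "\<And>f. L2M (piM \<pi>) f \<Longrightarrow> nM (piM \<pi>) (B f) \<le> C2 * nM (piM \<pi>) f"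
    using bopD3[OF B] by blast
  show ?thesis
  proof (rule bopI[where C="C1 * C2"])
    fix f assume f: "L2M (piM \<pi>) f"
    show "L2M (piM \<pi>) (K (B f))" by (intro bopD1[OF K] bopD1[OF B] f)
    have "nM (piM \<pi>) (K (B f)) \<le> C1 * nM (piM \<pi>) (B f)" by (intro C1 bopD1[OF B] f)
    also have "\<dots> \<le> C1 * (C2 * nM (piM \<pi>) f)" using C2[OF f] \<open>C1 > 0\<close> by simp
    finally show "nM (piM \<pi>) (K (B f)) \<le> C1 * C2 * nM (piM \<pi>) f" by simp
  next
    fix f g c assume f: "L2M (piM \<pi>) f" and g: "L2M (piM \<pi>) g"
    have Bf: "L2M (piM \<pi>) (B f)" and Bg: "L2M (piM \<pi>) (B g)" using f g by (auto intro: bopD1[OF B])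
    have "AE x in piM \<pi>. K (B (\<lambda>y. c * f y + g y)) x = K (\<lambda>y. c * B f y + B g y) x"
      by (intro bop_cong[OF K] bopD1[OF B] L2M_lin f g Bf Bg bopD2[OF B])
    moreover have "AE x in piM \<pi>. K (\<lambda>y. c * B f y + B g y) x = c * K (B f) x + K (B g) x"
      by (intro bopD2[OF K] Bf Bg)
    ultimately show "AE x in piM \<pi>. K (B (\<lambda>y. c * f y + g y)) x = c * K (B f) x + K (B g) x"
      by eventually_elim simp
  qed
qed

lemma bop_lin:
  assumes K1: "bounded_op_L2 \<pi> K1" and K2: "bounded_op_L2 \<pi> K2"
  shows "bounded_op_L2 \<pi> (\<lambda>f x. K1 f x + d * K2 f x)"
proof -
  obtain C1 where "C1 > 0" and C1: "\<And>f. L2M (piM \<pi>) f \<Longrightarrow> nM (piM \<pi>) (K1 f) \<le> C1 * nM (piM \<pi>) f"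
    using bopD3[OF K1] by blast
  obtain C2 where "C2 > 0" and C2: "\<And>f. L2M (piM \<pi>) f \<Longrightarrow> nM (piM \<pi>) (K2 f) \<le> C2 * nM (piM \<pi>) f"
    using bopD3[OF K2] by blast
  show ?thesis
  proof (rule bopI[where C="C1 + \<bar>d\<bar> * C2"])
    fix f assume f: "L2M (piM \<pi>) f"
    have a: "L2M (piM \<pi>) (K1 f)" "L2M (piM \<pi>) (K2 f)" using f by (auto intro: bopD1[OF K1] bopD1[OF K2])
    then show "L2M (piM \<pi>) (\<lambda>x. K1 f x + d * K2 f x)" by (intro L2M_add L2M_cmult)
    have "nM (piM \<pi>) (\<lambda>x. K1 f x + d * K2 f x) \<le> nM (piM \<pi>) (K1 f) + nM (piM \<pi>) (\<lambda>x. d * K2 f x)"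
      using a by (intro nM_tri L2M_cmult)
    also have "\<dots> = nM (piM \<pi>) (K1 f) + \<bar>d\<bar> * nM (piM \<pi>) (K2 f)" by (simp add: nM_cmult)
    also have "\<dots> \<le> C1 * nM (piM \<pi>) f + \<bar>d\<bar> * (C2 * nM (piM \<pi>) f)"
      using C1[OF f] C2[OF f] by (intro add_mono mult_left_mono) auto
    finally show "nM (piM \<pi>) (\<lambda>x. K1 f x + d * K2 f x) \<le> (C1 + \<bar>d\<bar> * C2) * nM (piM \<pi>) f"
      by (simp add: algebra_simps)
  next
    fix f g c assume f: "L2M (piM \<pi>) f" and g: "L2M (piM \<pi>) g"
    have "AE x in piM \<pi>. K1 (\<lambda>y. c * f y + g y) x = c * K1 f x + K1 g x" by (rule bopD2[OF K1 f g])
    moreover have "AE x in piM \<pi>. K2 (\<lambda>y. c * f y + g y) x = c * K2 f x + K2 g x" by (rule bopD2[OF K2 f g])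
    ultimately show "AE x in piM \<pi>. K1 (\<lambda>y. c * f y + g y) x + d * K2 (\<lambda>y. c * f y + g y) x =
        c * (K1 f x + d * K2 f x) + (K1 g x + d * K2 g x)"
      by eventually_elim (simp add: algebra_simps)
  qed
qed

lemma bop_add: "bounded_op_L2 \<pi> K1 \<Longrightarrow> bounded_op_L2 \<pi> K2 \<Longrightarrow> bounded_op_L2 \<pi> (\<lambda>f x. K1 f x + K2 f x)"
  using bop_lin[of \<pi> K1 K2 1] by simp

lemma bop_diff: "bounded_op_L2 \<pi> K1 \<Longrightarrow> bounded_op_L2 \<pi> K2 \<Longrightarrow> bounded_op_L2 \<pi> (\<lambda>f x. K1 f x - K2 f x)"
  using bop_lin[of \<pi> K1 K2 "-1"] by simp

lemma bop_id: "bounded_op_L2 \<pi> (\<lambda>f. f)"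
  by (rule bopI[where C=1]) auto

lemma bop_pow: "bounded_op_L2 \<pi> K \<Longrightarrow> bounded_op_L2 \<pi> (K ^^ n)"
proof (induction n)
  case 0 then show ?case using bop_id by (simp add: id_def)
next
  case (Suc n)
  have "K ^^ Suc n = (\<lambda>f. K ((K ^^ n) f))" by (simp add: fun_eq_iff)
  then show ?case using bop_comp[OF Suc.prems Suc.IH[OF Suc.prems]] by simp
qed

definition cauchyK :: "(real \<Rightarrow> real) \<Rightarrow> ((real \<Rightarrow> real) \<Rightarrow> real \<Rightarrow> real) \<Rightarrow> (nat \<Rightarrow> real \<Rightarrow> real) \<Rightarrow> (nat \<Rightarrow> nat) \<Rightarrow> bool" where
  "cauchyK \<pi> K F r \<longleftrightarrow> (\<forall>e::real>0. \<exists>N::nat. \<forall>m\<ge>N. \<forall>k\<ge>N. nM (piM \<pi>) (\<lambda>x. K (F (r m)) x - K (F (r k)) x) < e)"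

lemma cop_unfold:
  "compact_op_L2 \<pi> K \<longleftrightarrow> bounded_op_L2 \<pi> K \<and>
     (\<forall>(F :: nat \<Rightarrow> real \<Rightarrow> real) (B::real). (\<forall>k. L2M (piM \<pi>) (F k) \<and> nM (piM \<pi>) (F k) \<le> B) \<longrightarrow>
        (\<exists>r. strict_mono r \<and> cauchyK \<pi> K F r))"
  by (simp add: compact_op_L2_def L2_eq L2norm_eq cauchyK_def)

lemma copI:
  assumes "bounded_op_L2 \<pi> K"
    and "\<And>F B. (\<And>k. L2M (piM \<pi>) (F k)) \<Longrightarrow> (\<And>k. nM (piM \<pi>) (F k) \<le> B) \<Longrightarrow> \<exists>r. strict_mono r \<and> cauchyK \<pi> K F r"
  shows "compact_op_L2 \<pi> K"
  unfolding cop_unfold using assms by blast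

lemma copD1: "compact_op_L2 \<pi> K \<Longrightarrow> bounded_op_L2 \<pi> K"
  unfolding cop_unfold by blast

lemma copD2: "compact_op_L2 \<pi> K \<Longrightarrow> (\<And>k. L2M (piM \<pi>) (F k)) \<Longrightarrow> (\<And>k. nM (piM \<pi>) (F k) \<le> B) \<Longrightarrow>
   \<exists>r. strict_mono r \<and> cauchyK \<pi> K F r"
  unfolding cop_unfold by blast

lemma cauchyK_sub:
  assumes "cauchyK \<pi> K F r" "strict_mono r2"
  shows "cauchyK \<pi> K F (r \<circ> r2)"
  unfolding cauchyK_def
proof (intro allI impI)
  fix e :: real assume "e > 0"
  then obtain N where N: "\<And>m k. m \<ge> N \<Longrightarrow> k \<ge> N \<Longrightarrow> nM (piM \<pi>) (\<lambda>x. K (F (r m)) x - K (F (r k)) x) < e"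
    using assms(1) unfolding cauchyK_def by blast
  have "\<forall>m\<ge>N. \<forall>k\<ge>N. nM (piM \<pi>) (\<lambda>x. K (F ((r \<circ> r2) m)) x - K (F ((r \<circ> r2) k)) x) < e"
  proof (intro allI impI)
    fix m k assume "m \<ge> N" "k \<ge> N"
    then have "r2 m \<ge> N" "r2 k \<ge> N" using seq_suble[OF assms(2)] le_trans by blast+
    then show "nM (piM \<pi>) (\<lambda>x. K (F ((r \<circ> r2) m)) x - K (F ((r \<circ> r2) k)) x) < e" using N by simp
  qed
  then show "\<exists>N. \<forall>m\<ge>N. \<forall>k\<ge>N. nM (piM \<pi>) (\<lambda>x. K (F ((r \<circ> r2) m)) x - K (F ((r \<circ> r2) k)) x) < e" by blast
qed

lemma cop_cong:
  assumes K': "compact_op_L2 \<pi> K'" and K: "bounded_op_L2 \<pi> K"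
    and eq: "\<And>f. L2M (piM \<pi>) f \<Longrightarrow> AE x in piM \<pi>. K f x = K' f x"
  shows "compact_op_L2 \<pi> K"
proof (rule copI[OF K])
  fix F :: "nat \<Rightarrow> real \<Rightarrow> real" and B
  assume F: "\<And>k. L2M (piM \<pi>) (F k)" "\<And>k. nM (piM \<pi>) (F k) \<le> B"
  obtain r where r: "strict_mono r" "cauchyK \<pi> K' F r" using copD2[of \<pi> K' F B, OF K' F] by blast
  have "nM (piM \<pi>) (\<lambda>x. K (F (r m)) x - K (F (r k)) x) = nM (piM \<pi>) (\<lambda>x. K' (F (r m)) x - K' (F (r k)) x)" for m k
  proof (rule nM_cong_AE)
    show "(\<lambda>x. K (F (r m)) x - K (F (r k)) x) \<in> borel_measurable (piM \<pi>)"
      by (intro L2M_meas L2M_diff bopD1[OF K] F(1))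
    show "(\<lambda>x. K' (F (r m)) x - K' (F (r k)) x) \<in> borel_measurable (piM \<pi>)"
      by (intro L2M_meas L2M_diff bopD1[OF copD1[OF K']] F(1))
    show "AE x in piM \<pi>. K (F (r m)) x - K (F (r k)) x = K' (F (r m)) x - K' (F (r k)) x"
      using eq[OF F(1)[of "r m"]] eq[OF F(1)[of "r k"]] by eventually_elim simp
  qed
  then have "cauchyK \<pi> K F r" using r(2) by (simp add: cauchyK_def)
  then show "\<exists>r. strict_mono r \<and> cauchyK \<pi> K F r" using r(1) by blast
qed

lemma cop_comp_right:
  assumes K: "compact_op_L2 \<pi> K" and B: "bounded_op_L2 \<pi> B"
  shows "compact_op_L2 \<pi> (\<lambda>f. K (B f))"
proof (rule copI[OF bop_comp[OF copD1[OF K] B]])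
  fix F :: "nat \<Rightarrow> real \<Rightarrow> real" and Bd
  assume F: "\<And>k. L2M (piM \<pi>) (F k)" "\<And>k. nM (piM \<pi>) (F k) \<le> Bd"
  obtain C where "C > 0" and C: "\<And>f. L2M (piM \<pi>) f \<Longrightarrow> nM (piM \<pi>) (B f) \<le> C * nM (piM \<pi>) f"
    using bopD3[OF B] by blast
  have 1: "L2M (piM \<pi>) (B (F k))" for k by (intro bopD1[OF B] F)
  have 2: "nM (piM \<pi>) (B (F k)) \<le> C * Bd" for k
    using C[OF F(1)[of k]] F(2)[of k] \<open>C > 0\<close> by (meson mult_left_mono less_imp_le order_trans)
  obtain r where "strict_mono r" "cauchyK \<pi> K (\<lambda>k. B (F k)) r" using copD2[of \<pi> K "\<lambda>k. B (F k)" "C * Bd", OF K 1 2] by blast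
  then show "\<exists>r. strict_mono r \<and> cauchyK \<pi> (\<lambda>f. K (B f)) F r" by (auto simp: cauchyK_def)
qed

lemma cop_comp_left:
  assumes B: "bounded_op_L2 \<pi> B" and K: "compact_op_L2 \<pi> K"
  shows "compact_op_L2 \<pi> (\<lambda>f. B (K f))"
proof (rule copI[OF bop_comp[OF B copD1[OF K]]])
  fix F :: "nat \<Rightarrow> real \<Rightarrow> real" and Bd
  assume F: "\<And>k. L2M (piM \<pi>) (F k)" "\<And>k. nM (piM \<pi>) (F k) \<le> Bd"
  obtain C where "C > 0" and C: "\<And>f. L2M (piM \<pi>) f \<Longrightarrow> nM (piM \<pi>) (B f) \<le> C * nM (piM \<pi>) f"
    using bopD3[OF B] by blast
  obtain r where r: "strict_mono r" "cauchyK \<pi> K F r" using copD2[of \<pi> K F Bd, OF K F] by blast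
  have KF: "L2M (piM \<pi>) (K (F k))" for k by (intro bopD1[OF copD1[OF K]] F)
  have key: "nM (piM \<pi>) (\<lambda>x. B (K (F m)) x - B (K (F k)) x) \<le> C * nM (piM \<pi>) (\<lambda>x. K (F m) x - K (F k) x)" for m k
  proof -
    have "AE x in piM \<pi>. B (\<lambda>y. (-1) * K (F k) y + K (F m) y) x = (-1) * B (K (F k)) x + B (K (F m)) x"
      by (intro bopD2[OF B] KF)
    then have ae: "AE x in piM \<pi>. B (K (F m)) x - B (K (F k)) x = B (\<lambda>y. (-1) * K (F k) y + K (F m) y) x"
      by eventually_elim simp
    have m1: "(\<lambda>x. B (K (F m)) x - B (K (F k)) x) \<in> borel_measurable (piM \<pi>)"
      by (intro L2M_meas L2M_diff bopD1[OF B] KF)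
    have m2: "B (\<lambda>y. (-1) * K (F k) y + K (F m) y) \<in> borel_measurable (piM \<pi>)"
      by (intro L2M_meas bopD1[OF B] L2M_lin KF)
    have "nM (piM \<pi>) (\<lambda>x. B (K (F m)) x - B (K (F k)) x) = nM (piM \<pi>) (B (\<lambda>y. (-1) * K (F k) y + K (F m) y))"
      by (rule nM_cong_AE[OF m1 m2 ae])
    also have "\<dots> \<le> C * nM (piM \<pi>) (\<lambda>y. (-1) * K (F k) y + K (F m) y)"
      by (intro C L2M_lin KF)
    also have "(\<lambda>y. (-1) * K (F k) y + K (F m) y) = (\<lambda>x. K (F m) x - K (F k) x)" by auto
    finally show ?thesis .
  qed
  have "cauchyK \<pi> (\<lambda>f. B (K f)) F r"
    unfolding cauchyK_def
  proof (intro allI impI)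
    fix e :: real assume "e > 0"
    then have "e / C > 0" using \<open>C > 0\<close> by simp
    then obtain N where N: "\<And>m k. m \<ge> N \<Longrightarrow> k \<ge> N \<Longrightarrow> nM (piM \<pi>) (\<lambda>x. K (F (r m)) x - K (F (r k)) x) < e / C"
      using r(2) unfolding cauchyK_def by blast
    have "nM (piM \<pi>) (\<lambda>x. B (K (F (r m))) x - B (K (F (r k))) x) < e" if "m \<ge> N" "k \<ge> N" for m k
    proof -
      have "nM (piM \<pi>) (\<lambda>x. B (K (F (r m))) x - B (K (F (r k))) x) \<le> C * nM (piM \<pi>) (\<lambda>x. K (F (r m)) x - K (F (r k)) x)"
        by (rule key)
      also have "\<dots> < C * (e / C)" using mult_strict_left_mono[OF N[OF that] \<open>C > 0\<close>] .
      finally show ?thesis using \<open>C > 0\<close> by simp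
    qed
    then show "\<exists>N. \<forall>m\<ge>N. \<forall>k\<ge>N. nM (piM \<pi>) (\<lambda>x. B (K (F (r m))) x - B (K (F (r k))) x) < e" by blast
  qed
  then show "\<exists>r. strict_mono r \<and> cauchyK \<pi> (\<lambda>f. B (K f)) F r" using r(1) by blast
qed

lemma cop_lin:
  assumes K1: "compact_op_L2 \<pi> K1" and K2: "compact_op_L2 \<pi> K2"
  shows "compact_op_L2 \<pi> (\<lambda>f x. K1 f x + d * K2 f x)"
proof (rule copI[OF bop_lin[OF copD1[OF K1] copD1[OF K2]]])
  fix F :: "nat \<Rightarrow> real \<Rightarrow> real" and Bd
  assume F: "\<And>k. L2M (piM \<pi>) (F k)" "\<And>k. nM (piM \<pi>) (F k) \<le> Bd"
  obtain r1 where r1: "strict_mono r1" "cauchyK \<pi> K1 F r1" using copD2[of \<pi> K1 F Bd, OF K1 F] by blast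
  obtain r2 where r2: "strict_mono r2" "cauchyK \<pi> K2 (\<lambda>k. F (r1 k)) r2"
    using copD2[OF K2, of "\<lambda>k. F (r1 k)" Bd] F by blast
  define r where "r = r1 \<circ> r2"
  have mono: "strict_mono r" unfolding r_def using r1(1) r2(1) by (rule strict_mono_o)
  have c1: "cauchyK \<pi> K1 F r" unfolding r_def by (rule cauchyK_sub[OF r1(2) r2(1)])
  have c2: "cauchyK \<pi> K2 F r" using r2(2) unfolding r_def cauchyK_def by simp
  have KF1: "L2M (piM \<pi>) (K1 (F k))" and KF2: "L2M (piM \<pi>) (K2 (F k))" for k
    using F(1) by (auto intro: bopD1[OF copD1[OF K1]] bopD1[OF copD1[OF K2]])
  have "cauchyK \<pi> (\<lambda>f x. K1 f x + d * K2 f x) F r"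
    unfolding cauchyK_def
  proof (intro allI impI)
    fix e :: real assume "e > 0"
    define e' where "e' = e / (2 * (1 + \<bar>d\<bar>))"
    have "e' > 0" using \<open>e > 0\<close> unfolding e'_def by (simp add: add_pos_nonneg)
    obtain N1 where N1: "\<And>m k. m \<ge> N1 \<Longrightarrow> k \<ge> N1 \<Longrightarrow> nM (piM \<pi>) (\<lambda>x. K1 (F (r m)) x - K1 (F (r k)) x) < e'"
      using c1 \<open>e' > 0\<close> unfolding cauchyK_def by blast
    obtain N2 where N2: "\<And>m k. m \<ge> N2 \<Longrightarrow> k \<ge> N2 \<Longrightarrow> nM (piM \<pi>) (\<lambda>x. K2 (F (r m)) x - K2 (F (r k)) x) < e'"
      using c2 \<open>e' > 0\<close> unfolding cauchyK_def by blast
    have "nM (piM \<pi>) (\<lambda>x. (K1 (F (r m)) x + d * K2 (F (r m)) x) - (K1 (F (r k)) x + d * K2 (F (r k)) x)) < e"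
      if "m \<ge> max N1 N2" "k \<ge> max N1 N2" for m k
    proof -
      let ?u = "\<lambda>x. K1 (F (r m)) x - K1 (F (r k)) x" and ?v = "\<lambda>x. K2 (F (r m)) x - K2 (F (r k)) x"
      have "(\<lambda>x. (K1 (F (r m)) x + d * K2 (F (r m)) x) - (K1 (F (r k)) x + d * K2 (F (r k)) x)) = (\<lambda>x. ?u x + d * ?v x)"
        by (auto simp: algebra_simps)
      then have eq: "nM (piM \<pi>) (\<lambda>x. (K1 (F (r m)) x + d * K2 (F (r m)) x) - (K1 (F (r k)) x + d * K2 (F (r k)) x)) = nM (piM \<pi>) (\<lambda>x. ?u x + d * ?v x)"
        by simp
      moreover have "nM (piM \<pi>) (\<lambda>x. ?u x + d * ?v x) \<le> nM (piM \<pi>) ?u + nM (piM \<pi>) (\<lambda>x. d * ?v x)"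
        by (intro nM_tri L2M_diff L2M_cmult KF1 KF2)
      moreover have "nM (piM \<pi>) (\<lambda>x. d * ?v x) = \<bar>d\<bar> * nM (piM \<pi>) ?v" by (rule nM_cmult)
      moreover have "nM (piM \<pi>) ?u < e'" using N1 that by simp
      moreover have "\<bar>d\<bar> * nM (piM \<pi>) ?v \<le> \<bar>d\<bar> * e'" using N2 that by (intro mult_left_mono) (auto intro: less_imp_le)
      moreover have "e' + \<bar>d\<bar> * e' < e"
      proof -
        have "e' + \<bar>d\<bar> * e' = e' * (1 + \<bar>d\<bar>)" by (simp add: algebra_simps)
        also have "\<dots> = e / 2" unfolding e'_def by (simp add: field_simps add_pos_nonneg)
        finally show ?thesis using \<open>e > 0\<close> by simp
      qed
      ultimately show ?thesis by linarith
    qed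
    then show "\<exists>N. \<forall>m\<ge>N. \<forall>k\<ge>N. nM (piM \<pi>) (\<lambda>x. (K1 (F (r m)) x + d * K2 (F (r m)) x) - (K1 (F (r k)) x + d * K2 (F (r k)) x)) < e"
      by blast
  qed
  then show "\<exists>r. strict_mono r \<and> cauchyK \<pi> (\<lambda>f x. K1 f x + d * K2 f x) F r" using mono by blast
qed

lemma cop_add: "compact_op_L2 \<pi> K1 \<Longrightarrow> compact_op_L2 \<pi> K2 \<Longrightarrow> compact_op_L2 \<pi> (\<lambda>f x. K1 f x + K2 f x)"
  using cop_lin[of \<pi> K1 K2 1] by simp

locale mh =
  fixes \<pi> :: "real \<Rightarrow> real" and q :: "real \<Rightarrow> real \<Rightarrow> real" and Mq s :: real
  assumes pi_pos: "\<And>x. \<pi> x > 0" and pi_cont: "continuous_on UNIV \<pi>" and pi_int: "integrable lborel \<pi>"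
    and q_nonneg: "\<And>x y. q x y \<ge> 0" and q_cont: "continuous_on UNIV (\<lambda>(x, y). q x y)"
    and q_bdd: "\<And>x y. q x y \<le> Mq" and q_int: "\<And>x. integrable lborel (q x)"
    and q_one: "\<And>x. (LINT y|lborel. q x y) = 1"
    and s_pos: "s > 0" and q_supp: "\<And>x u. \<bar>u\<bar> > s \<Longrightarrow> q x (x + u) = 0"
begin

abbreviation "t \<equiv> mh_t \<pi> q"
abbreviation "PM \<equiv> piM \<pi>"

lemma pi_meas_borel: "\<pi> \<in> borel_measurable borel"
  by (rule borel_measurable_continuous_onI[OF pi_cont])

lemma pi_meas_raw[measurable (raw)]: "f \<in> borel_measurable N \<Longrightarrow> (\<lambda>x. \<pi> (f x)) \<in> borel_measurable N"
  using measurable_compose[of f N borel \<pi> borel] pi_meas_borel by (simp add: o_def)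

lemma t_cont: "continuous_on UNIV (\<lambda>p. t (fst p) (snd p))"
proof -
  have qc: "continuous_on UNIV (\<lambda>p. q (fst p) (snd p))" using q_cont by (simp add: case_prod_unfold)
  have qs: "continuous_on UNIV (\<lambda>p. q (snd p) (fst p))"
    using continuous_on_compose2[OF qc continuous_on_swap[of UNIV]] by (simp add: prod.swap_def)
  have p1: "continuous_on UNIV (\<lambda>p::real\<times>real. \<pi> (fst p))"
    by (rule continuous_on_compose2[OF pi_cont continuous_on_fst[OF continuous_on_id]]) auto
  have p2: "continuous_on UNIV (\<lambda>p::real\<times>real. \<pi> (snd p))"
    by (rule continuous_on_compose2[OF pi_cont continuous_on_snd[OF continuous_on_id]]) auto
  have "continuous_on UNIV (\<lambda>p. min (q (fst p) (snd p)) (\<pi> (snd p) * q (snd p) (fst p) / \<pi> (fst p)))"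
    using pi_pos by (intro continuous_on_min qc continuous_on_divide continuous_on_mult p1 p2 qs) (auto simp: less_imp_neq[symmetric])
  then show ?thesis by (simp add: mh_t_def)
qed

lemma t_meas_borel: "(\<lambda>p. t (fst p) (snd p)) \<in> borel_measurable (borel \<Otimes>\<^sub>M borel)"
  using borel_measurable_continuous_onI[OF t_cont] by (simp add: borel_prod)

lemma t_meas_raw[measurable (raw)]:
  "f \<in> borel_measurable N \<Longrightarrow> g \<in> borel_measurable N \<Longrightarrow> (\<lambda>x. t (f x) (g x)) \<in> borel_measurable N"
proof -
  assume f: "f \<in> borel_measurable N" and g: "g \<in> borel_measurable N"
  have "(\<lambda>x. (f x, g x)) \<in> measurable N (borel \<Otimes>\<^sub>M borel)" using f g by (rule measurable_Pair)
  from measurable_compose[OF this t_meas_borel] show ?thesis by simp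
qed

lemma q_meas_raw[measurable (raw)]:
  "f \<in> borel_measurable N \<Longrightarrow> g \<in> borel_measurable N \<Longrightarrow> (\<lambda>x. q (f x) (g x)) \<in> borel_measurable N"
proof -
  assume f: "f \<in> borel_measurable N" and g: "g \<in> borel_measurable N"
  have qc: "continuous_on UNIV (\<lambda>p. q (fst p) (snd p))" using q_cont by (simp add: case_prod_unfold)
  have qm: "(\<lambda>p. q (fst p) (snd p)) \<in> borel_measurable (borel \<Otimes>\<^sub>M borel)"
    using borel_measurable_continuous_onI[OF qc] by (simp add: borel_prod)
  have "(\<lambda>x. (f x, g x)) \<in> measurable N (borel \<Otimes>\<^sub>M borel)" using f g by (rule measurable_Pair)
  from measurable_compose[OF this qm] show ?thesis by simp
qed

lemma t_nonneg: "t x y \<ge> 0"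
  using q_nonneg[of x y] q_nonneg[of y x] pi_pos[of x] pi_pos[of y] by (simp add: mh_t_def)

lemma t_le_q: "t x y \<le> q x y" by (simp add: mh_t_def)

lemma t_le_Mq: "t x y \<le> Mq" using t_le_q q_bdd order_trans by blast

lemma Mq_nonneg: "Mq \<ge> 0" using q_nonneg q_bdd order_trans by blast

lemma t_le_pi: "t x y \<le> Mq * \<pi> y / \<pi> x"
proof -
  have "t x y \<le> \<pi> y * q y x / \<pi> x" by (simp add: mh_t_def)
  also have "\<dots> \<le> Mq * \<pi> y / \<pi> x"
    using q_bdd[of y x] pi_pos[of x] pi_pos[of y] by (intro divide_right_mono) (auto simp: mult.commute intro: mult_left_mono)
  finally show ?thesis .
qed

lemma t_zero: "\<bar>x - y\<bar> > s \<Longrightarrow> t x y = 0"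
proof -
  assume "\<bar>x - y\<bar> > s"
  then have "\<bar>y - x\<bar> > s" by simp
  from q_supp[OF this, of x] have "q x y = 0" by simp
  then show "t x y = 0" using t_nonneg[of x y] t_le_q[of x y] by simp
qed

lemma t_bal: "\<pi> x * t x y = \<pi> y * t y x"
proof -
  have px: "\<pi> x > 0" and py: "\<pi> y > 0" using pi_pos by auto
  have "\<pi> x * t x y = min (\<pi> x * q x y) (\<pi> y * q y x)"
    using px by (simp add: mh_t_def min_mult_distrib_left)
  also have "\<dots> = \<pi> y * t y x"
    using py by (simp add: mh_t_def min_mult_distrib_left min.commute)
  finally show ?thesis .
qed

lemma t_int: "integrable lborel (t x)"
  by (rule Bochner_Integration.integrable_bound[OF q_int[of x]]) (auto simp: t_nonneg t_le_q abs_of_nonneg q_nonneg)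

lemma t_int_le1: "(LINT y|lborel. t x y) \<le> 1"
proof -
  have "(LINT y|lborel. t x y) \<le> (LINT y|lborel. q x y)"
    by (rule integral_mono[OF t_int q_int]) (rule t_le_q)
  then show ?thesis using q_one by simp
qed

lemma t_int_nonneg: "(LINT y|lborel. t x y) \<ge> 0"
  by (rule integral_nonneg_AE) (simp add: t_nonneg)


lemma pi_meas[measurable]: "\<pi> \<in> borel_measurable lborel"
  by measurable

lemma AE_PM: "(AE x in PM. P x) \<longleftrightarrow> (AE x in lborel. P x)"
  unfolding piM_def by (subst AE_density) (auto simp: pi_pos)

lemma int_PM: "f \<in> borel_measurable lborel \<Longrightarrow> integrable PM f \<longleftrightarrow> integrable lborel (\<lambda>x. \<pi> x * f x)"
  unfolding piM_def by (subst integrable_density) (auto simp: pi_pos less_imp_le)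

lemma integral_PM: "f \<in> borel_measurable lborel \<Longrightarrow> integral\<^sup>L PM f = (LINT x|lborel. \<pi> x * f x)"
  unfolding piM_def by (subst integral_density) (auto simp: pi_pos less_imp_le)

lemma nn_PM: "f \<in> borel_measurable lborel \<Longrightarrow> integral\<^sup>N PM f = (\<integral>\<^sup>+ x. ennreal (\<pi> x) * f x \<partial>lborel)"
  unfolding piM_def by (subst nn_integral_density) auto

lemma L2_loc: "L2M PM f \<Longrightarrow> integrable lborel (\<lambda>y. \<pi> y * (f y)\<^sup>2)"
  unfolding L2M_def using int_PM by auto

lemma f2t_int: assumes f: "L2M PM f" shows "integrable lborel (\<lambda>y. (f y)\<^sup>2 * t x y)"
proof (rule Bochner_Integration.integrable_bound)
  show "integrable lborel (\<lambda>y. (Mq / \<pi> x) * (\<pi> y * (f y)\<^sup>2))" using L2_loc[OF f] by simp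
  show "(\<lambda>y. (f y)\<^sup>2 * t x y) \<in> borel_measurable lborel" using f by (auto simp: L2M_def)
  show "AE y in lborel. norm ((f y)\<^sup>2 * t x y) \<le> norm ((Mq / \<pi> x) * (\<pi> y * (f y)\<^sup>2))"
  proof (rule AE_I2)
    fix y
    have "(f y)\<^sup>2 * t x y \<le> (f y)\<^sup>2 * (Mq * \<pi> y / \<pi> x)" by (rule mult_left_mono[OF t_le_pi]) simp
    also have "\<dots> = (Mq / \<pi> x) * (\<pi> y * (f y)\<^sup>2)" by simp
    finally show "norm ((f y)\<^sup>2 * t x y) \<le> norm ((Mq / \<pi> x) * (\<pi> y * (f y)\<^sup>2))"
      using t_nonneg[of x y] pi_pos[of x] pi_pos[of y] Mq_nonneg by simp
  qed
qed

lemma abs_le_sq1: "\<bar>z::real\<bar> \<le> z\<^sup>2 + 1"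
proof (cases "\<bar>z\<bar> \<le> 1")
  case True then show ?thesis by (simp add: add_increasing)
next
  case False
  then have "\<bar>z\<bar> * 1 \<le> \<bar>z\<bar> * \<bar>z\<bar>" by (intro mult_left_mono) auto
  then show ?thesis by (simp add: power2_eq_square abs_mult_self_eq)
qed

lemma ft_int: assumes f: "L2M PM f" shows "integrable lborel (\<lambda>y. f y * t x y)"
proof (rule Bochner_Integration.integrable_bound)
  show "integrable lborel (\<lambda>y. (f y)\<^sup>2 * t x y + t x y)" using f2t_int[OF f] t_int by simp
  show "(\<lambda>y. f y * t x y) \<in> borel_measurable lborel" using f by (auto simp: L2M_def)
  show "AE y in lborel. norm (f y * t x y) \<le> norm ((f y)\<^sup>2 * t x y + t x y)"
  proof (rule AE_I2)
    fix y
    have "\<bar>f y\<bar> * t x y \<le> ((f y)\<^sup>2 + 1) * t x y" by (rule mult_right_mono[OF abs_le_sq1 t_nonneg])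
    then show "norm (f y * t x y) \<le> norm ((f y)\<^sup>2 * t x y + t x y)"
      using t_nonneg[of x y] by (simp add: abs_mult algebra_simps)
  qed
qed

lemma T_meas: assumes f[measurable]: "f \<in> borel_measurable lborel" shows "mh_T \<pi> q f \<in> borel_measurable lborel"
proof -
  have "(\<lambda>x. LINT y|lborel. f y * t x y) \<in> borel_measurable lborel"
    by (rule sigma_finite_measure.borel_measurable_lebesgue_integral[OF sigma_finite_lborel]) measurable
  then show ?thesis by (simp add: mh_T_def[abs_def])
qed

lemma T_lin: assumes "L2M PM f" "L2M PM g"
  shows "mh_T \<pi> q (\<lambda>y. c * f y + g y) x = c * mh_T \<pi> q f x + mh_T \<pi> q g x"
proof -
  have "mh_T \<pi> q (\<lambda>y. c * f y + g y) x = (LINT y|lborel. c * (f y * t x y) + g y * t x y)"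
    unfolding mh_T_def by (rule Bochner_Integration.integral_cong) (auto simp: algebra_simps)
  also have "\<dots> = c * mh_T \<pi> q f x + mh_T \<pi> q g x"
    using ft_int[OF assms(1)] ft_int[OF assms(2)] by (simp add: mh_T_def)
  finally show ?thesis .
qed

lemma T_sq: assumes f: "L2M PM f" shows "(mh_T \<pi> q f x)\<^sup>2 \<le> (LINT y|lborel. (f y)\<^sup>2 * t x y)"
proof -
  define u where "u = (\<lambda>y. f y * sqrt (t x y))"
  define v where "v = (\<lambda>y. sqrt (t x y))"
  have uu: "(\<lambda>y. (u y)\<^sup>2) = (\<lambda>y. (f y)\<^sup>2 * t x y)" unfolding u_def by (auto simp: power_mult_distrib t_nonneg)
  have vv: "(\<lambda>y. (v y)\<^sup>2) = t x" unfolding v_def by (auto simp: t_nonneg)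
  have uv: "(\<lambda>y. u y * v y) = (\<lambda>y. f y * t x y)" unfolding u_def v_def by (auto simp: t_nonneg)
  have Lu: "L2M lborel u" unfolding L2M_def uu using f2t_int[OF f] f
    unfolding u_def by (auto simp: L2M_def)
  have Lv: "L2M lborel v" unfolding L2M_def vv using t_int unfolding v_def by auto
  have "(mh_T \<pi> q f x)\<^sup>2 = (LINT y|lborel. u y * v y)\<^sup>2" by (simp add: uv mh_T_def)
  also have "\<dots> \<le> (LINT y|lborel. (u y)\<^sup>2) * (LINT y|lborel. (v y)\<^sup>2)" by (rule CS_int[OF Lu Lv])
  also have "\<dots> = (LINT y|lborel. (f y)\<^sup>2 * t x y) * (LINT y|lborel. t x y)" by (simp add: uu vv)
  also have "\<dots> \<le> (LINT y|lborel. (f y)\<^sup>2 * t x y) * 1"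
    by (rule mult_left_mono[OF t_int_le1]) (auto intro!: integral_nonneg_AE simp: t_nonneg)
  finally show ?thesis by simp
qed

end

context mh begin

lemma T_nn_bound:
  assumes f: "L2M PM f"
  shows "(\<integral>\<^sup>+ x. ennreal (\<pi> x * (mh_T \<pi> q f x)\<^sup>2) \<partial>lborel) \<le> ennreal (LINT y|lborel. \<pi> y * (f y)\<^sup>2)"
proof -
  have fm[measurable]: "f \<in> borel_measurable lborel" using f by (simp add: L2M_def)
  have "(\<integral>\<^sup>+ x. ennreal (\<pi> x * (mh_T \<pi> q f x)\<^sup>2) \<partial>lborel) \<le>
        (\<integral>\<^sup>+ x. ennreal (\<pi> x * (LINT y|lborel. (f y)\<^sup>2 * t x y)) \<partial>lborel)"
    by (intro nn_integral_mono ennreal_leI mult_left_mono T_sq[OF f]) (auto simp: pi_pos less_imp_le)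
  also have "\<dots> = (\<integral>\<^sup>+ x. (\<integral>\<^sup>+ y. ennreal (\<pi> x * ((f y)\<^sup>2 * t x y)) \<partial>lborel) \<partial>lborel)"
  proof (rule nn_integral_cong)
    fix x
    have "(\<integral>\<^sup>+ y. ennreal (\<pi> x * ((f y)\<^sup>2 * t x y)) \<partial>lborel) = ennreal (LINT y|lborel. \<pi> x * ((f y)\<^sup>2 * t x y))"
      by (rule nn_integral_eq_integral) (auto intro!: f2t_int[OF f] simp: t_nonneg pi_pos less_imp_le)
    then show "ennreal (\<pi> x * (LINT y|lborel. (f y)\<^sup>2 * t x y)) = (\<integral>\<^sup>+ y. ennreal (\<pi> x * ((f y)\<^sup>2 * t x y)) \<partial>lborel)"
      by simp
  qed
  also have "\<dots> = (\<integral>\<^sup>+ x. (\<integral>\<^sup>+ y. ennreal (\<pi> y * (f y)\<^sup>2 * t y x) \<partial>lborel) \<partial>lborel)"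
  proof (intro nn_integral_cong)
    fix x y
    have "\<pi> x * ((f y)\<^sup>2 * t x y) = (f y)\<^sup>2 * (\<pi> x * t x y)" by simp
    also have "\<dots> = \<pi> y * (f y)\<^sup>2 * t y x" by (simp add: t_bal)
    finally have e: "\<pi> x * ((f y)\<^sup>2 * t x y) = \<pi> y * (f y)\<^sup>2 * t y x" .
    show "ennreal (\<pi> x * ((f y)\<^sup>2 * t x y)) = ennreal (\<pi> y * (f y)\<^sup>2 * t y x)" by (simp only: e)
  qed
  also have "\<dots> = (\<integral>\<^sup>+ y. (\<integral>\<^sup>+ x. ennreal (\<pi> y * (f y)\<^sup>2 * t y x) \<partial>lborel) \<partial>lborel)"
    by (rule lborel_pair.Fubini'[of "\<lambda>y x. ennreal (\<pi> x * (f x)\<^sup>2 * t x y)", symmetric]) measurable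
  also have "\<dots> \<le> (\<integral>\<^sup>+ y. ennreal (\<pi> y * (f y)\<^sup>2) \<partial>lborel)"
  proof (rule nn_integral_mono)
    fix y
    have "(\<integral>\<^sup>+ x. ennreal (\<pi> y * (f y)\<^sup>2 * t y x) \<partial>lborel) = ennreal (LINT x|lborel. \<pi> y * (f y)\<^sup>2 * t y x)"
      by (rule nn_integral_eq_integral) (auto intro!: t_int simp: t_nonneg pi_pos less_imp_le)
    also have "\<dots> = ennreal (\<pi> y * (f y)\<^sup>2 * (LINT x|lborel. t y x))" by simp
    also have "\<dots> \<le> ennreal (\<pi> y * (f y)\<^sup>2 * 1)"
      by (intro ennreal_leI mult_left_mono t_int_le1) (auto simp: pi_pos less_imp_le)
    finally show "(\<integral>\<^sup>+ x. ennreal (\<pi> y * (f y)\<^sup>2 * t y x) \<partial>lborel) \<le> ennreal (\<pi> y * (f y)\<^sup>2)" by simp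
  qed
  also have "\<dots> = ennreal (LINT y|lborel. \<pi> y * (f y)\<^sup>2)"
    by (rule nn_integral_eq_integral[OF L2_loc[OF f]]) (auto simp: pi_pos less_imp_le)
  finally show ?thesis .
qed

lemma T_L2:
  assumes f: "L2M PM f"
  shows "L2M PM (mh_T \<pi> q f)" "nM PM (mh_T \<pi> q f) \<le> nM PM f"
proof -
  have fm[measurable]: "f \<in> borel_measurable lborel" using f by (simp add: L2M_def)
  have Tm[measurable]: "mh_T \<pi> q f \<in> borel_measurable lborel" by (rule T_meas[OF fm])
  have nb: "(\<integral>\<^sup>+ x. ennreal (\<pi> x * (mh_T \<pi> q f x)\<^sup>2) \<partial>lborel) \<le> ennreal (LINT y|lborel. \<pi> y * (f y)\<^sup>2)"
    by (rule T_nn_bound[OF f])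
  have i: "integrable lborel (\<lambda>x. \<pi> x * (mh_T \<pi> q f x)\<^sup>2)"
  proof (rule integrableI_bounded)
    show "(\<lambda>x. \<pi> x * (mh_T \<pi> q f x)\<^sup>2) \<in> borel_measurable lborel" by measurable
    have "(\<integral>\<^sup>+ x. ennreal (norm (\<pi> x * (mh_T \<pi> q f x)\<^sup>2)) \<partial>lborel) = (\<integral>\<^sup>+ x. ennreal (\<pi> x * (mh_T \<pi> q f x)\<^sup>2) \<partial>lborel)"
      by (intro nn_integral_cong) (auto simp: pi_pos less_imp_le)
    also have "\<dots> < \<infinity>" using nb by (simp add: le_less_trans)
    finally show "(\<integral>\<^sup>+ x. ennreal (norm (\<pi> x * (mh_T \<pi> q f x)\<^sup>2)) \<partial>lborel) < \<infinity>" .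
  qed
  then show L: "L2M PM (mh_T \<pi> q f)" unfolding L2M_def by (auto simp: int_PM)
  have "ennreal (LINT x|lborel. \<pi> x * (mh_T \<pi> q f x)\<^sup>2) = (\<integral>\<^sup>+ x. ennreal (\<pi> x * (mh_T \<pi> q f x)\<^sup>2) \<partial>lborel)"
    by (rule nn_integral_eq_integral[OF i, symmetric]) (auto simp: pi_pos less_imp_le)
  with nb have le: "ennreal (LINT x|lborel. \<pi> x * (mh_T \<pi> q f x)\<^sup>2) \<le> ennreal (LINT y|lborel. \<pi> y * (f y)\<^sup>2)"
    by simp
  have "0 \<le> (LINT y|lborel. \<pi> y * (f y)\<^sup>2)" by (auto intro!: integral_nonneg_AE simp: pi_pos less_imp_le)
  with le have "(LINT x|lborel. \<pi> x * (mh_T \<pi> q f x)\<^sup>2) \<le> (LINT y|lborel. \<pi> y * (f y)\<^sup>2)"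
    using ennreal_le_iff by blast
  then have "(nM PM (mh_T \<pi> q f))\<^sup>2 \<le> (nM PM f)\<^sup>2"
    by (simp add: nM_sq integral_PM)
  then show "nM PM (mh_T \<pi> q f) \<le> nM PM f" using nM_nonneg by (meson power2_le_imp_le)
qed

lemma T_bop: "bounded_op_L2 \<pi> (mh_T \<pi> q)"
proof (rule bopI[where C=1])
  fix f assume "L2M PM f" then show "L2M PM (mh_T \<pi> q f)" by (rule T_L2)
next
  fix f assume "L2M PM f" then show "nM PM (mh_T \<pi> q f) \<le> 1 * nM PM f" using T_L2 by simp
next
  fix f g c assume "L2M PM f" "L2M PM g"
  then show "AE x in PM. mh_T \<pi> q (\<lambda>y. c * f y + g y) x = c * mh_T \<pi> q f x + mh_T \<pi> q g x"
    by (simp add: T_lin)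
qed

lemma mul_bop:
  assumes h: "h \<in> borel_measurable lborel" and hb: "\<And>x. \<bar>h x\<bar> \<le> B"
  shows "bounded_op_L2 \<pi> (\<lambda>f x. h x * f x)"
proof (rule bopI[where C=B])
  have hm: "h \<in> borel_measurable PM" using h by simp
  fix f assume f: "L2M PM f"
  show "L2M PM (\<lambda>x. h x * f x)" by (rule L2M_mult_bdd(1)[OF f hm hb])
  show "nM PM (\<lambda>x. h x * f x) \<le> B * nM PM f" by (rule L2M_mult_bdd(2)[OF f hm hb])
next
  fix f g c
  show "AE x in PM. h x * (c * f x + g x) = c * (h x * f x) + h x * g x"
    by (simp add: algebra_simps)
qed

end

lemma AA_seq:
  fixes f :: "nat \<Rightarrow> real \<Rightarrow> real"
  assumes bdd: "\<And>k x. \<bar>f k x\<bar> \<le> L"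
    and eqc: "\<And>e. e > 0 \<Longrightarrow> \<exists>\<delta>>0. \<forall>k x y. \<bar>x - y\<bar> < \<delta> \<longrightarrow> \<bar>f k x - f k y\<bar> < e"
  shows "\<exists>s. strict_mono s \<and> (\<forall>x. convergent (\<lambda>k. f (s k) x))"
proof -
  obtain m :: "real \<Rightarrow> nat" where "bij_betw m \<rat> UNIV"
    using countable_rat Rats_infinite by (erule countableE_infinite)
  then obtain r :: "nat \<Rightarrow> real" where bij: "bij_betw r UNIV \<rat>"
    using bij_betw_inv by blast
  have dense_r: "\<And>x y. x < y \<Longrightarrow> \<exists>n. x < r n \<and> r n < y"
    by (metis Rats_dense_in_real bij f_the_inv_into_f bij_betw_def)
  let ?P = "\<lambda>n. \<lambda>s. convergent (\<lambda>k. f (s k) (r n))"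
  interpret nat: subseqs ?P
  proof (unfold convergent_def, unfold subseqs_def, auto)
    fix n :: nat and s :: "nat \<Rightarrow> nat" assume s: "strict_mono s"
    have "bounded {-L..L}"
      using bounded_closed_interval by auto
    moreover have "\<And>k. f (s k) (r n) \<in> {-L..L}"
      using bdd by (simp add: abs_le_iff minus_le_iff)
    ultimately have "\<exists>l s'. strict_mono s' \<and> ((\<lambda>k. f (s k) (r n)) \<circ> s') \<longlonglongrightarrow> l"
      using compact_Icc compact_imp_seq_compact seq_compactE by metis
    thus "\<exists>s'. strict_mono (s'::nat\<Rightarrow>nat) \<and> (\<exists>l. (\<lambda>k. f (s (s' k)) (r n)) \<longlonglongrightarrow> l)"
      by (auto simp: comp_def)
  qed
  define d where "d = nat.diagseq"
  have subseq: "strict_mono d"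
    unfolding d_def using nat.subseq_diagseq by auto
  have rat_cnv: "?P n d" for n
  proof -
    have Pn_seqseq: "?P n (nat.seqseq (Suc n))"
      by (rule nat.seqseq_holds)
    have 1: "(\<lambda>k. f ((nat.seqseq (Suc n) \<circ> (\<lambda>k. nat.fold_reduce (Suc n) k
      (Suc n + k))) k) (r n)) = (\<lambda>k. f (nat.seqseq (Suc n) k) (r n)) \<circ>
      (\<lambda>k. nat.fold_reduce (Suc n) k (Suc n + k))"
      by auto
    have 2: "?P n (d \<circ> ((+) (Suc n)))"
      unfolding d_def nat.diagseq_seqseq 1
      by (intro convergent_subseq_convergent Pn_seqseq nat.subseq_diagonal_rest)
    then obtain L where 3: "(\<lambda>na. f (d (na + Suc n)) (r n)) \<longlonglongrightarrow> L"
      by (auto simp: add.commute dest: convergentD)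
    then have "(\<lambda>k. f (d k) (r n)) \<longlonglongrightarrow> L"
      by (rule LIMSEQ_offset)
    then show ?thesis
      by (auto simp: convergent_def)
  qed
  have "convergent (\<lambda>k. f (d k) x)" for x
  proof -
    have "Cauchy (\<lambda>k. f (d k) x)"
    proof (rule metric_CauchyI)
      fix e :: real assume "e > 0"
      then obtain \<delta> where "\<delta> > 0" and \<delta>: "\<And>k x y. \<bar>x - y\<bar> < \<delta> \<Longrightarrow> \<bar>f k x - f k y\<bar> < e / 3"
        using eqc[of "e/3"] by auto
      obtain n where n: "x - \<delta> < r n" "r n < x + \<delta>" using dense_r[of "x - \<delta>" "x + \<delta>"] \<open>\<delta> > 0\<close> by auto
      then have xr: "\<bar>x - r n\<bar> < \<delta>" by auto
      have "Cauchy (\<lambda>k. f (d k) (r n))" using rat_cnv[of n] by (simp add: convergent_Cauchy)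
      then obtain N where N: "\<And>i j. i \<ge> N \<Longrightarrow> j \<ge> N \<Longrightarrow> dist (f (d i) (r n)) (f (d j) (r n)) < e / 3"
        using \<open>e > 0\<close> unfolding Cauchy_def by (meson divide_pos_pos zero_less_numeral)
      have "dist (f (d i) x) (f (d j) x) < e" if "i \<ge> N" "j \<ge> N" for i j
      proof -
        have a: "\<bar>f (d i) x - f (d i) (r n)\<bar> < e/3" using \<delta> xr by blast
        have b: "\<bar>f (d j) x - f (d j) (r n)\<bar> < e/3" using \<delta> xr by blast
        have c: "\<bar>f (d i) (r n) - f (d j) (r n)\<bar> < e/3" using N[OF that] by (simp add: dist_real_def)
        show ?thesis using a b c unfolding dist_real_def by linarith
      qed
      then show "\<exists>N. \<forall>i\<ge>N. \<forall>j\<ge>N. dist (f (d i) x) (f (d j) x) < e" by blast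
    qed
    then show ?thesis by (simp add: Cauchy_convergent_iff)
  qed
  then show ?thesis using subseq by blast
qed

context mh begin

lemma ind_meas[measurable]: "indicator {-c..c::real} \<in> borel_measurable lborel"
  by measurable

lemma ind_le1: "\<bar>indicator A x :: real\<bar> \<le> 1"
  by (simp split: split_indicator)

lemma L2M_bdd:
  assumes h: "h \<in> borel_measurable lborel" and hb: "\<And>x. \<bar>h x\<bar> \<le> B"
  shows "L2M PM h"
proof -
  have "integrable lborel (\<lambda>x. \<pi> x * (h x)\<^sup>2)"
  proof (rule Bochner_Integration.integrable_bound)
    show "integrable lborel (\<lambda>x. B\<^sup>2 * \<pi> x)" using pi_int by simp
    show "(\<lambda>x. \<pi> x * (h x)\<^sup>2) \<in> borel_measurable lborel" using h by measurable
    show "AE x in lborel. norm (\<pi> x * (h x)\<^sup>2) \<le> norm (B\<^sup>2 * \<pi> x)"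
    proof (rule AE_I2)
      fix x
      have "(h x)\<^sup>2 \<le> B\<^sup>2" using power_mono[OF hb[of x] abs_ge_zero, of 2] by simp
      then have "\<pi> x * (h x)\<^sup>2 \<le> \<pi> x * B\<^sup>2" using pi_pos[of x] by (intro mult_left_mono) auto
      then show "norm (\<pi> x * (h x)\<^sup>2) \<le> norm (B\<^sup>2 * \<pi> x)" using pi_pos[of x] by (simp add: mult.commute)
    qed
  qed
  then show ?thesis using h unfolding L2M_def by (auto simp: int_PM)
qed

definition Gop :: "real \<Rightarrow> real \<Rightarrow> (real \<Rightarrow> real) \<Rightarrow> real \<Rightarrow> real" where
  "Gop c d f x = indicator {-c..c} x * mh_T \<pi> q (\<lambda>y. indicator {-d..d} y * f y) x"

lemma mul_ind_bop: "bounded_op_L2 \<pi> (\<lambda>f x. indicator {-c..c} x * f x)"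
  by (rule mul_bop[OF ind_meas ind_le1])

lemma Gop_bop: "bounded_op_L2 \<pi> (Gop c d)"
proof -
  have "Gop c d = (\<lambda>f. (\<lambda>f x. indicator {-c..c} x * f x) (mh_T \<pi> q ((\<lambda>f x. indicator {-d..d} x * f x) f)))"
    by (simp add: Gop_def[abs_def])
  then show ?thesis using bop_comp[OF mul_ind_bop bop_comp[OF T_bop mul_ind_bop]] by simp
qed

lemma W_bound:
  assumes F: "L2M PM F" and d: "d \<ge> 0" and m: "m > 0" and mle: "\<And>y. y \<in> {-d..d} \<Longrightarrow> m \<le> \<pi> y"
  shows "integrable lborel (\<lambda>y. indicator {-d..d} y * \<bar>F y\<bar>)"
    "(LINT y|lborel. indicator {-d..d} y * \<bar>F y\<bar>) \<le> 2 * d + (nM PM F)\<^sup>2 / m"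
proof -
  have Fm[measurable]: "F \<in> borel_measurable lborel" using F by (simp add: L2M_def)
  have pt: "indicator {-d..d} y * \<bar>F y\<bar> \<le> indicator {-d..d} y + \<pi> y * (F y)\<^sup>2 / m" for y
  proof (cases "y \<in> {-d..d}")
    case True
    have "\<bar>F y\<bar> \<le> 1 + (F y)\<^sup>2" using abs_le_sq1[of "F y"] by simp
    also have "(F y)\<^sup>2 \<le> \<pi> y * (F y)\<^sup>2 / m"
      using mle[OF True] m by (simp add: field_simps mult_right_mono)
    finally show ?thesis using True by simp
  next
    case False then show ?thesis using pi_pos[of y] m by simp
  qed
  have iu: "integrable lborel (\<lambda>y. indicator {-d..d} y + \<pi> y * (F y)\<^sup>2 / m)"
    using L2_loc[OF F] by (intro Bochner_Integration.integrable_add integrable_divide) (auto intro!: integrable_real_indicator simp: emeasure_lborel_Icc_eq)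
  show i: "integrable lborel (\<lambda>y. indicator {-d..d} y * \<bar>F y\<bar>)"
  proof (rule Bochner_Integration.integrable_bound[OF iu])
    show "(\<lambda>y. indicator {-d..d} y * \<bar>F y\<bar>) \<in> borel_measurable lborel" by measurable
    show "AE y in lborel. norm (indicator {-d..d} y * \<bar>F y\<bar>) \<le> norm (indicator {-d..d} y + \<pi> y * (F y)\<^sup>2 / m)"
    proof (rule AE_I2)
      fix y
      have "norm (indicator {-d..d} y * \<bar>F y\<bar>) = indicator {-d..d} y * \<bar>F y\<bar>" by (simp add: abs_mult)
      then show "norm (indicator {-d..d} y * \<bar>F y\<bar>) \<le> norm (indicator {-d..d} y + \<pi> y * (F y)\<^sup>2 / m)"
        using order_trans[OF pt abs_ge_self] by simp
    qed
  qed
  have "(LINT y|lborel. indicator {-d..d} y * \<bar>F y\<bar>) \<le> (LINT y|lborel. indicator {-d..d} y + \<pi> y * (F y)\<^sup>2 / m)"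
    by (rule integral_mono[OF i iu pt])
  also have "\<dots> = (LINT y|lborel. indicator {-d..d} y) + (LINT y|lborel. \<pi> y * (F y)\<^sup>2) / m"
    using L2_loc[OF F] by (subst Bochner_Integration.integral_add) (auto intro!: integrable_real_indicator simp: emeasure_lborel_Icc_eq)
  also have "(LINT y|lborel. indicator {-d..d} y :: real) = 2 * d"
    using d by simp
  also have "(LINT y|lborel. \<pi> y * (F y)\<^sup>2) = (nM PM F)\<^sup>2"
    using Fm by (simp add: nM_sq integral_PM)
  finally show "(LINT y|lborel. indicator {-d..d} y * \<bar>F y\<bar>) \<le> 2 * d + (nM PM F)\<^sup>2 / m" .
qed

lemma h_bound:
  assumes F: "L2M PM F" and iW: "integrable lborel (\<lambda>y. indicator {-d..d} y * \<bar>F y\<bar>)"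
  shows "\<bar>mh_T \<pi> q (\<lambda>y. indicator {-d..d} y * F y) x\<bar> \<le> Mq * (LINT y|lborel. indicator {-d..d} y * \<bar>F y\<bar>)"
proof -
  have "\<bar>mh_T \<pi> q (\<lambda>y. indicator {-d..d} y * F y) x\<bar> \<le> (LINT y|lborel. norm (indicator {-d..d} y * F y * t x y))"
    unfolding mh_T_def using integral_norm_bound[of lborel "\<lambda>y. indicator {-d..d} y * F y * t x y"] by simp
  also have "\<dots> \<le> (LINT y|lborel. Mq * (indicator {-d..d} y * \<bar>F y\<bar>))"
  proof (rule integral_mono')
    show "integrable lborel (\<lambda>y. Mq * (indicator {-d..d} y * \<bar>F y\<bar>))" using iW by simp
    fix y
    show "0 \<le> Mq * (indicator {-d..d} y * \<bar>F y\<bar>)" using Mq_nonneg by simp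
    have "\<bar>indicator {-d..d} y * F y\<bar> * t x y \<le> \<bar>indicator {-d..d} y * F y\<bar> * Mq"
      by (rule mult_left_mono[OF t_le_Mq]) simp
    then show "norm (indicator {-d..d} y * F y * t x y) \<le> Mq * (indicator {-d..d} y * \<bar>F y\<bar>)"
      using t_nonneg[of x y] by (simp add: abs_mult mult_ac)
  qed
  finally show ?thesis by simp
qed

lemma h_diff_bound:
  assumes F: "L2M PM F" and iW: "integrable lborel (\<lambda>y. indicator {-d..d} y * \<bar>F y\<bar>)"
    and eps: "\<And>y. y \<in> {-d..d} \<Longrightarrow> \<bar>t x y - t x' y\<bar> \<le> \<epsilon>" and e0: "\<epsilon> \<ge> 0"
  shows "\<bar>mh_T \<pi> q (\<lambda>y. indicator {-d..d} y * F y) x - mh_T \<pi> q (\<lambda>y. indicator {-d..d} y * F y) x'\<bar>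
     \<le> \<epsilon> * (LINT y|lborel. indicator {-d..d} y * \<bar>F y\<bar>)"
proof -
  have Fm[measurable]: "F \<in> borel_measurable lborel" using F by (simp add: L2M_def)
  have Fd: "L2M PM (\<lambda>y. indicator {-d..d} y * F y)"
    by (rule L2M_mult_bdd(1)[OF F _ ind_le1]) simp
  have "mh_T \<pi> q (\<lambda>y. indicator {-d..d} y * F y) x - mh_T \<pi> q (\<lambda>y. indicator {-d..d} y * F y) x'
      = (LINT y|lborel. indicator {-d..d} y * F y * t x y) - (LINT y|lborel. indicator {-d..d} y * F y * t x' y)"
    by (simp add: mh_T_def)
  also have "\<dots> = (LINT y|lborel. indicator {-d..d} y * F y * t x y - indicator {-d..d} y * F y * t x' y)"
    by (rule Bochner_Integration.integral_diff[symmetric]) (rule ft_int[OF Fd])+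
  also have "\<dots> = (LINT y|lborel. indicator {-d..d} y * F y * (t x y - t x' y))"
    by (simp add: right_diff_distrib)
  finally have eq: "mh_T \<pi> q (\<lambda>y. indicator {-d..d} y * F y) x - mh_T \<pi> q (\<lambda>y. indicator {-d..d} y * F y) x'
      = (LINT y|lborel. indicator {-d..d} y * F y * (t x y - t x' y))" .
  have "\<bar>LINT y|lborel. indicator {-d..d} y * F y * (t x y - t x' y)\<bar> \<le> (LINT y|lborel. norm (indicator {-d..d} y * F y * (t x y - t x' y)))"
    using integral_norm_bound[of lborel "\<lambda>y. indicator {-d..d} y * F y * (t x y - t x' y)"] by simp
  also have "\<dots> \<le> (LINT y|lborel. \<epsilon> * (indicator {-d..d} y * \<bar>F y\<bar>))"
  proof (rule integral_mono')
    show "integrable lborel (\<lambda>y. \<epsilon> * (indicator {-d..d} y * \<bar>F y\<bar>))" using iW by simp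
    fix y
    show "0 \<le> \<epsilon> * (indicator {-d..d} y * \<bar>F y\<bar>)" using e0 by simp
    show "norm (indicator {-d..d} y * F y * (t x y - t x' y)) \<le> \<epsilon> * (indicator {-d..d} y * \<bar>F y\<bar>)"
    proof (cases "y \<in> {-d..d}")
      case True
      have "\<bar>F y\<bar> * \<bar>t x y - t x' y\<bar> \<le> \<bar>F y\<bar> * \<epsilon>" by (rule mult_left_mono[OF eps[OF True]]) simp
      then show ?thesis using True by (simp add: abs_mult mult_ac)
    qed simp
  qed
  finally show ?thesis unfolding eq by simp
qed

end

context mh begin

lemma Gop_cop:
  assumes c: "c \<ge> 0" and d: "d \<ge> 0"
  shows "compact_op_L2 \<pi> (Gop c d)"
proof (rule copI[OF Gop_bop])
  fix F :: "nat \<Rightarrow> real \<Rightarrow> real" and B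
  assume F: "\<And>k. L2M PM (F k)" and FB: "\<And>k. nM PM (F k) \<le> B"
  have B0: "B \<ge> 0" using FB[of 0] nM_nonneg[of PM "F 0"] by linarith
  obtain y0 where y0: "y0 \<in> {-d..d}" "\<forall>y\<in>{-d..d}. \<pi> y0 \<le> \<pi> y"
    using continuous_attains_inf[of "{-d..d}" \<pi>] d continuous_on_subset[OF pi_cont] by auto
  define m where "m = \<pi> y0"
  have m: "m > 0" using pi_pos by (simp add: m_def)
  have mle: "\<And>y. y \<in> {-d..d} \<Longrightarrow> m \<le> \<pi> y" using y0 by (simp add: m_def)
  define L0 where "L0 = 2 * d + B\<^sup>2 / m"
  have L0: "L0 \<ge> 0" using d m by (simp add: L0_def)
  define W where "W k = (LINT y|lborel. indicator {-d..d} y * \<bar>F k y\<bar>)" for k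
  have iW: "integrable lborel (\<lambda>y. indicator {-d..d} y * \<bar>F k y\<bar>)" for k by (rule W_bound(1)[OF F d m mle])
  have WL: "W k \<le> L0" for k
  proof -
    have "W k \<le> 2 * d + (nM PM (F k))\<^sup>2 / m" unfolding W_def by (rule W_bound(2)[OF F d m mle])
    moreover have "(nM PM (F k))\<^sup>2 \<le> B\<^sup>2" using FB[of k] nM_nonneg by (intro power_mono) auto
    then have "2 * d + (nM PM (F k))\<^sup>2 / m \<le> L0" unfolding L0_def using m by (simp add: divide_right_mono)
    ultimately show ?thesis by linarith
  qed
  define h where "h k x = mh_T \<pi> q (\<lambda>y. indicator {-d..d} y * F k y) x" for k x
  have hb: "\<bar>h k x\<bar> \<le> Mq * L0" for k x
  proof -
    have "\<bar>h k x\<bar> \<le> Mq * W k" unfolding h_def W_def by (rule h_bound[OF F iW])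
    also have "\<dots> \<le> Mq * L0" using WL Mq_nonneg by (intro mult_left_mono) auto
    finally show ?thesis .
  qed
  define cl where "cl x = max (-c) (min c x)" for x
  have cl_in: "cl x \<in> {-c..c}" for x using c by (auto simp: cl_def)
  have cl_lip: "\<bar>cl x - cl x'\<bar> \<le> \<bar>x - x'\<bar>" for x x' by (auto simp: cl_def max_def min_def)
  have cl_id: "x \<in> {-c..c} \<Longrightarrow> cl x = x" for x by (auto simp: cl_def)
  define ff where "ff k x = h k (cl x)" for k x
  have uc: "uniformly_continuous_on ({-c..c} \<times> {-d..d}) (\<lambda>p. t (fst p) (snd p))"
    by (rule compact_uniformly_continuous[OF continuous_on_subset[OF t_cont]]) (auto intro: compact_Times)
  have eqc: "\<exists>\<delta>>0. \<forall>k x y. \<bar>x - y\<bar> < \<delta> \<longrightarrow> \<bar>ff k x - ff k y\<bar> < e" if e: "e > 0" for e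
  proof -
    define \<epsilon> where "\<epsilon> = e / (L0 + 1)"
    have \<epsilon>: "\<epsilon> > 0" using e L0 by (simp add: \<epsilon>_def)
    obtain \<delta> where \<delta>: "\<delta> > 0" and \<delta>u: "\<forall>p\<in>{-c..c} \<times> {-d..d}. \<forall>p'\<in>{-c..c} \<times> {-d..d}. dist p' p < \<delta> \<longrightarrow> dist (t (fst p') (snd p')) (t (fst p) (snd p)) < \<epsilon>"
      using uc \<epsilon> unfolding uniformly_continuous_on_def by blast
    have "\<bar>ff k x - ff k x'\<bar> < e" if xx: "\<bar>x - x'\<bar> < \<delta>" for k x x'
    proof -
      have epsb: "\<bar>t (cl x) y - t (cl x') y\<bar> \<le> \<epsilon>" if y: "y \<in> {-d..d}" for y
      proof -
        have "dist (cl x, y) (cl x', y) < \<delta>" using cl_lip[of x x'] xx by (simp add: dist_Pair_Pair dist_real_def)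
        then have "dist (t (cl x) y) (t (cl x') y) < \<epsilon>" using \<delta>u cl_in y by (metis SigmaI fst_conv snd_conv)
        then show ?thesis by (simp add: dist_real_def)
      qed
      have "\<bar>ff k x - ff k x'\<bar> \<le> \<epsilon> * W k" unfolding ff_def h_def W_def
        by (rule h_diff_bound[OF F iW epsb]) (use \<epsilon> in auto)
      also have "\<dots> \<le> \<epsilon> * L0" using WL \<epsilon> by (intro mult_left_mono) auto
      also have "\<dots> < e"
      proof -
        have "\<epsilon> * L0 = e * (L0 / (L0 + 1))" by (simp add: \<epsilon>_def)
        also have "\<dots> < e * 1" using e L0 by (intro mult_strict_left_mono) auto
        finally show ?thesis by simp
      qed
      finally show ?thesis .
    qed
    then show ?thesis using \<delta> by blast
  qed
  have ffb: "\<bar>ff k x\<bar> \<le> Mq * L0" for k x using hb by (simp add: ff_def)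
  obtain sq where sq: "strict_mono sq" and conv: "\<And>x. convergent (\<lambda>k. ff (sq k) x)"
    using AA_seq[of ff "Mq * L0", OF ffb eqc] by blast
  define g where "g x = indicator {-c..c} x * lim (\<lambda>k. ff (sq k) x)" for x
  have OG: "Gop c d (F k) x = indicator {-c..c} x * h k x" for k x by (simp add: Gop_def h_def)
  have lim: "(\<lambda>k. Gop c d (F (sq k)) x) \<longlonglongrightarrow> g x" for x
  proof (cases "x \<in> {-c..c}")
    case True
    have "(\<lambda>k. ff (sq k) x) \<longlonglongrightarrow> lim (\<lambda>k. ff (sq k) x)" using conv[of x] by (simp add: convergent_LIMSEQ_iff)
    moreover have "\<And>k. Gop c d (F (sq k)) x = ff (sq k) x" using True by (simp add: OG ff_def cl_id)
    ultimately show ?thesis using True by (simp add: g_def)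
  next
    case False then show ?thesis by (simp add: OG g_def)
  qed
  have Ob: "\<bar>Gop c d (F k) x\<bar> \<le> Mq * L0" for k x
  proof -
    have "\<bar>Gop c d (F k) x\<bar> = \<bar>indicator {-c..c} x :: real\<bar> * \<bar>h k x\<bar>" by (simp add: OG abs_mult)
    also have "\<dots> \<le> 1 * \<bar>h k x\<bar>" by (intro mult_right_mono ind_le1) auto
    finally show ?thesis using hb[of k x] by simp
  qed
  have gb: "\<bar>g x\<bar> \<le> Mq * L0" for x
    by (rule LIMSEQ_le_const2[OF tendsto_rabs[OF lim[of x]]]) (use Ob in auto)
  have OL: "L2M PM (Gop c d (F k))" for k by (rule bopD1[OF Gop_bop F])
  have Om[measurable]: "Gop c d (F k) \<in> borel_measurable lborel" for k using OL[of k] by (simp add: L2M_def)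
  have gm[measurable]: "g \<in> borel_measurable lborel"
    by (rule borel_measurable_LIMSEQ_real[where u="\<lambda>k. Gop c d (F (sq k))"]) (use lim Om in auto)
  have gL: "L2M PM g" by (rule L2M_bdd[OF gm gb])
  define D where "D k = (\<lambda>x. Gop c d (F (sq k)) x - g x)" for k
  have DL: "L2M PM (D k)" for k unfolding D_def by (intro L2M_diff OL gL)
  have Dm[measurable]: "D k \<in> borel_measurable lborel" for k unfolding D_def by measurable
  have Db: "\<bar>D k x\<bar> \<le> 2 * Mq * L0" for k x
    using Ob[of "sq k" x] gb[of x] unfolding D_def by linarith
  have Dint: "(\<lambda>k. LINT x|lborel. \<pi> x * (D k x)\<^sup>2) \<longlonglongrightarrow> 0"
  proof -
    have "(\<lambda>k. LINT x|lborel. \<pi> x * (D k x)\<^sup>2) \<longlonglongrightarrow> (LINT (x::real)|lborel. (0::real))"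
    proof (rule integral_dominated_convergence[where w="\<lambda>x. \<pi> x * (2 * Mq * L0)\<^sup>2" and s="\<lambda>k x. \<pi> x * (D k x)\<^sup>2" and f="\<lambda>x::real. 0::real"])
      show "(\<lambda>x. 0::real) \<in> borel_measurable lborel" by simp
      show "(\<lambda>x. \<pi> x * (D k x)\<^sup>2) \<in> borel_measurable lborel" for k by measurable
      show "integrable lborel (\<lambda>x. \<pi> x * (2 * Mq * L0)\<^sup>2)" using pi_int by simp
      show "AE x in lborel. (\<lambda>k. \<pi> x * (D k x)\<^sup>2) \<longlonglongrightarrow> 0"
      proof (rule AE_I2)
        fix x
        have "(\<lambda>k. D k x) \<longlonglongrightarrow> g x - g x" unfolding D_def by (intro tendsto_diff lim tendsto_const)
        then have "(\<lambda>k. \<pi> x * (D k x)\<^sup>2) \<longlonglongrightarrow> \<pi> x * (g x - g x)\<^sup>2" by (intro tendsto_mult_left tendsto_power)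
        then show "(\<lambda>k. \<pi> x * (D k x)\<^sup>2) \<longlonglongrightarrow> 0" by simp
      qed
      show "AE x in lborel. norm (\<pi> x * (D k x)\<^sup>2) \<le> \<pi> x * (2 * Mq * L0)\<^sup>2" for k
      proof (rule AE_I2)
        fix x
        have "(D k x)\<^sup>2 \<le> (2 * Mq * L0)\<^sup>2" using power_mono[OF Db[of k x] abs_ge_zero, of 2] by simp
        then have "\<pi> x * (D k x)\<^sup>2 \<le> \<pi> x * (2 * Mq * L0)\<^sup>2" using pi_pos[of x] by (intro mult_left_mono) auto
        then show "norm (\<pi> x * (D k x)\<^sup>2) \<le> \<pi> x * (2 * Mq * L0)\<^sup>2" using pi_pos[of x] by simp
      qed
    qed
    then show ?thesis by simp
  qed
  have nDeq: "nM PM (D k) = sqrt (LINT x|lborel. \<pi> x * (D k x)\<^sup>2)" for k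
    by (simp add: nM_def integral_PM)
  have nD: "(\<lambda>k. nM PM (D k)) \<longlonglongrightarrow> 0"
    using tendsto_real_sqrt[OF Dint] by (simp add: nDeq)
  have "cauchyK \<pi> (Gop c d) F sq" unfolding cauchyK_def
  proof (intro allI impI)
    fix e :: real assume "e > 0"
    then obtain N where N: "\<And>k. k \<ge> N \<Longrightarrow> nM PM (D k) < e / 2"
      using nD nM_nonneg unfolding LIMSEQ_iff by (metis abs_of_nonneg diff_zero half_gt_zero real_norm_def)
    have "nM PM (\<lambda>x. Gop c d (F (sq m)) x - Gop c d (F (sq k)) x) < e" if "m \<ge> N" "k \<ge> N" for m k
    proof -
      have "(\<lambda>x. Gop c d (F (sq m)) x - Gop c d (F (sq k)) x) = (\<lambda>x. D m x + (-1) * D k x)"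
        by (auto simp: D_def)
      then have "nM PM (\<lambda>x. Gop c d (F (sq m)) x - Gop c d (F (sq k)) x) = nM PM (\<lambda>x. D m x + (-1) * D k x)"
        by simp
      also have "\<dots> \<le> nM PM (D m) + nM PM (\<lambda>x. (-1) * D k x)" by (intro nM_tri DL L2M_cmult)
      also have "\<dots> = nM PM (D m) + nM PM (D k)" by (simp only: nM_cmult)
      also have "\<dots> < e / 2 + e / 2" using N that by (intro add_strict_mono) auto
      finally show ?thesis by simp
    qed
    then show "\<exists>N. \<forall>m\<ge>N. \<forall>k\<ge>N. nM PM (\<lambda>x. Gop c d (F (sq m)) x - Gop c d (F (sq k)) x) < e" by blast
  qed
  then show "\<exists>r. strict_mono r \<and> cauchyK \<pi> (Gop c d) F r" using sq by blast
qed

end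

context mh begin

lemma r_meas[measurable]: "mh_r \<pi> q \<in> borel_measurable lborel"
proof -
  have "(\<lambda>x. LINT y|lborel. t x y) \<in> borel_measurable lborel"
    by (rule sigma_finite_measure.borel_measurable_lebesgue_integral[OF sigma_finite_lborel]) measurable
  then show ?thesis unfolding mh_r_def[abs_def] by measurable
qed

lemma r_bnd: "\<bar>mh_r \<pi> q x\<bar> \<le> 1"
  using t_int_le1[of x] t_int_nonneg[of x] by (simp add: mh_r_def)

lemma R_eq: "mh_R \<pi> q = (\<lambda>f x. mh_r \<pi> q x * f x)"
  by (simp add: mh_R_def[abs_def])

lemma R_bop: "bounded_op_L2 \<pi> (mh_R \<pi> q)"
  unfolding R_eq by (rule mul_bop[OF r_meas r_bnd])

lemma restr_in_bop: "bounded_op_L2 \<pi> U \<Longrightarrow> bounded_op_L2 \<pi> (restr_in a U)"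
proof -
  assume U: "bounded_op_L2 \<pi> U"
  have "restr_in a U = (\<lambda>f. (\<lambda>f x. indicator {-a..a} x * f x) (U f))" by (simp add: restr_in_def[abs_def])
  then show ?thesis using bop_comp[OF mul_ind_bop U] by simp
qed

lemma restr_out_bop: "bounded_op_L2 \<pi> U \<Longrightarrow> bounded_op_L2 \<pi> (restr_out a U)"
proof -
  assume U: "bounded_op_L2 \<pi> U"
  have m: "indicator (UNIV - {-a..a}) \<in> borel_measurable lborel" by measurable
  have "restr_out a U = (\<lambda>f. (\<lambda>f x. indicator (UNIV - {-a..a}) x * f x) (U f))" by (simp add: restr_out_def[abs_def])
  then show ?thesis using bop_comp[OF mul_bop[OF m ind_le1] U] by simp
qed

lemma P_bop: "bounded_op_L2 \<pi> (mh_P \<pi> q)"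
proof -
  have "mh_P \<pi> q = (\<lambda>f x. mh_R \<pi> q f x + mh_T \<pi> q f x)" by (simp add: mh_P_def[abs_def])
  then show ?thesis using bop_add[OF R_bop T_bop] by simp
qed

lemma T_supp:
  assumes f: "\<And>y. f y \<noteq> 0 \<Longrightarrow> y \<in> {-d..d}" and x: "x \<notin> {-(d+s)..d+s}"
  shows "mh_T \<pi> q f x = 0"
proof -
  have "f y * t x y = 0" for y
  proof (cases "f y = 0")
    case False
    then have "y \<in> {-d..d}" by (rule f)
    then have "\<bar>x - y\<bar> > s" using x by auto
    then show ?thesis by (simp add: t_zero)
  qed simp
  then have "(\<lambda>y. f y * t x y) = (\<lambda>y. 0)" by (intro ext)
  then show ?thesis by (simp add: mh_T_def)
qed

lemma T_loc:
  assumes x: "x \<in> {-c..c}"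
  shows "mh_T \<pi> q f x = mh_T \<pi> q (\<lambda>y. indicator {-(c+s)..c+s} y * f y) x"
proof -
  have "f y * t x y = indicator {-(c+s)..c+s} y * f y * t x y" for y
  proof (cases "y \<in> {-(c+s)..c+s}")
    case False
    then have "\<bar>x - y\<bar> > s" using x by auto
    then show ?thesis by (simp add: t_zero)
  qed simp
  then have "(\<lambda>y. f y * t x y) = (\<lambda>y. indicator {-(c+s)..c+s} y * f y * t x y)" by (intro ext)
  then show ?thesis by (simp add: mh_T_def)
qed

end

locale mha = mh +
  fixes a :: real
  assumes a_pos: "a > 0"
begin

abbreviation "A \<equiv> restr_in a (mh_R \<pi> q)"
abbreviation "Tin \<equiv> restr_in a (mh_T \<pi> q)"
abbreviation "S \<equiv> (\<lambda>g y. restr_out a (mh_R \<pi> q) g y + restr_out a (mh_T \<pi> q) g y)"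
abbreviation "P \<equiv> mh_P \<pi> q"

definition Dop :: "(real \<Rightarrow> real) \<Rightarrow> real \<Rightarrow> real" where
  "Dop g x = indicator (UNIV - {-a..a}) x * Gop (a + s) a (\<lambda>y. mh_r \<pi> q y * g y) x"

definition Kn :: "nat \<Rightarrow> (real \<Rightarrow> real) \<Rightarrow> real \<Rightarrow> real" where
  "Kn n f x = (P ^^ n) f x - (A ^^ n) f x - (S ^^ n) f x"

lemma A_bop: "bounded_op_L2 \<pi> A" by (rule restr_in_bop[OF R_bop])
lemma Tin_bop: "bounded_op_L2 \<pi> Tin" by (rule restr_in_bop[OF T_bop])
lemma S_bop: "bounded_op_L2 \<pi> S" by (rule bop_add[OF restr_out_bop[OF R_bop] restr_out_bop[OF T_bop]])

lemma Tin_eq: "Tin = Gop a (a + s)"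
proof (intro ext)
  fix f x
  show "Tin f x = Gop a (a + s) f x"
  proof (cases "x \<in> {-a..a}")
    case True
    then show ?thesis unfolding restr_in_def Gop_def using T_loc[OF True, of f] by simp
  qed (simp add: restr_in_def Gop_def)
qed

lemma Tin_cop: "compact_op_L2 \<pi> Tin"
  unfolding Tin_eq using a_pos s_pos by (intro Gop_cop) auto

lemma Dop_cop: "compact_op_L2 \<pi> Dop"
proof -
  have m: "indicator (UNIV - {-a..a}) \<in> borel_measurable lborel" by measurable
  have "Dop = (\<lambda>g. (\<lambda>f x. indicator (UNIV - {-a..a}) x * f x) ((\<lambda>g. Gop (a + s) a ((\<lambda>f x. mh_r \<pi> q x * f x) g)) g))"
    by (simp add: Dop_def[abs_def])
  moreover have "compact_op_L2 \<pi> (\<lambda>g. Gop (a + s) a ((\<lambda>f x. mh_r \<pi> q x * f x) g))"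
    using a_pos s_pos by (intro cop_comp_right[OF Gop_cop mul_bop[OF r_meas r_bnd]]) auto
  ultimately show ?thesis using cop_comp_left[OF mul_bop[OF m ind_le1]] by simp
qed

lemma P_split: "P g x = A g x + Tin g x + S g x"
  by (simp add: mh_P_def restr_in_def restr_out_def split: split_indicator)

lemma A_S_zero: "A (S g) x = 0"
  by (simp add: mh_R_def restr_in_def restr_out_def split: split_indicator)

lemma A_add: "A (\<lambda>y. u y + v y) x = A u x + A v x"
  by (simp add: mh_R_def restr_in_def algebra_simps)

lemma S_add: assumes "L2M PM u" "L2M PM v" shows "S (\<lambda>y. u y + v y) x = S u x + S v x"
  using T_lin[OF assms, of 1 x] by (simp add: mh_R_def restr_out_def algebra_simps)

lemma A_eq: "A g = (\<lambda>y. indicator {-a..a} y * (mh_r \<pi> q y * g y))"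
  by (simp add: restr_in_def mh_R_def fun_eq_iff)

lemma S_A: "S (A g) x = Dop g x"
proof (cases "x \<in> {-(a+s)..a+s}")
  case True
  then show ?thesis
    by (simp add: Dop_def Gop_def restr_out_def A_eq mh_R_def split: split_indicator)
next
  case False
  have "mh_T \<pi> q (A g) x = 0"
    by (rule T_supp[OF _ False]) (simp add: restr_in_def split: split_indicator_asm)
  then show ?thesis using False
    by (simp add: Dop_def Gop_def restr_out_def restr_in_def mh_R_def split: split_indicator)
qed

lemma Kn_bop: "bounded_op_L2 \<pi> (Kn n)"
proof -
  have "Kn n = (\<lambda>f x. (\<lambda>f x. (P ^^ n) f x - (A ^^ n) f x) f x - (S ^^ n) f x)"
    by (simp add: Kn_def[abs_def])
  then show ?thesis
    using bop_diff[OF bop_diff[OF bop_pow[OF P_bop] bop_pow[OF A_bop]] bop_pow[OF S_bop]] by simp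
qed

lemma Kn_cop: "compact_op_L2 \<pi> (Kn (Suc m))"
proof (induction m)
  case 0
  have "Kn (Suc 0) = Tin" by (intro ext) (simp add: Kn_def P_split)
  then show ?case using Tin_cop by simp
next
  case (Suc m)
  define n where "n = Suc m"
  have IH: "compact_op_L2 \<pi> (Kn n)" using Suc.IH by (simp add: n_def)
  define J where "J = (\<lambda>f x. A (Kn n f) x + Tin ((P ^^ n) f) x + Dop ((A ^^ m) f) x + S (Kn n f) x)"
  have Jc: "compact_op_L2 \<pi> J"
    unfolding J_def
    by (intro cop_add cop_comp_left[OF A_bop IH] cop_comp_right[OF Tin_cop bop_pow[OF P_bop]]
        cop_comp_right[OF Dop_cop bop_pow[OF A_bop]] cop_comp_left[OF S_bop IH])
  show ?case unfolding n_def[symmetric]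
  proof (rule cop_cong[OF Jc Kn_bop])
    fix f assume f: "L2M PM f"
    let ?u = "(P ^^ n) f" and ?v = "(A ^^ n) f" and ?w = "(S ^^ n) f" and ?k = "Kn n f"
    have Lv: "L2M PM ?v" by (rule bopD1[OF bop_pow[OF A_bop] f])
    have Lw: "L2M PM ?w" by (rule bopD1[OF bop_pow[OF S_bop] f])
    have Lk: "L2M PM ?k" by (rule bopD1[OF Kn_bop f])
    have u_eq: "?u = (\<lambda>y. (?v y + ?k y) + ?w y)" by (auto simp: Kn_def)
    have v_eq: "?v = A ((A ^^ m) f)" by (simp add: n_def)
    have w_eq: "?w = S ((S ^^ m) f)" by (simp add: n_def)
    have "Kn (Suc n) f x = J f x" for x
    proof -
      have e0: "Kn (Suc n) f x = P ?u x - A ?v x - S ?w x" by (simp add: Kn_def)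
      have e1: "P ?u x = A ?u x + Tin ?u x + S ?u x" by (rule P_split)
      have e2: "A ?u x = A ?v x + A ?k x + A ?w x" unfolding u_eq by (simp only: A_add)
      have e3: "A ?w x = 0" unfolding w_eq by (rule A_S_zero)
      have e4: "S ?u x = S (\<lambda>y. ?v y + ?k y) x + S ?w x" unfolding u_eq by (rule S_add[OF L2M_add[OF Lv Lk] Lw])
      have e5: "S (\<lambda>y. ?v y + ?k y) x = S ?v x + S ?k x" by (rule S_add[OF Lv Lk])
      have e6: "S ?v x = Dop ((A ^^ m) f) x" unfolding v_eq by (rule S_A)
      have e7: "J f x = A ?k x + Tin ?u x + Dop ((A ^^ m) f) x + S ?k x" by (simp only: J_def)
      show ?thesis using e0 e1 e2 e3 e4 e5 e6 e7 by linarith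
    qed
    then show "AE x in PM. Kn (Suc n) f x = J f x" by simp
  qed
qed

end

theorem lemma3p2:
  fixes \<pi> :: "real \<Rightarrow> real" and q :: "real \<Rightarrow> real \<Rightarrow> real" and a :: real and n :: nat
  assumes pi_pos: "\<And>x. \<pi> x > 0"
    and pi_cont: "continuous_on UNIV \<pi>"
    and pi_int: "integrable lborel \<pi>"
    and pi_one: "(LINT x|lborel. \<pi> x) = 1"
    and q_nonneg: "\<And>x y. q x y \<ge> 0"
    and q_cont: "continuous_on UNIV (\<lambda>(x, y). q x y)"
    and q_bdd: "\<exists>M. \<forall>x y. q x y \<le> M"
    and q_int: "\<And>x. integrable lborel (q x)"
    and q_one: "\<And>x. (LINT y|lborel. q x y) = 1"
    and q_supp: "\<exists>s>0. \<forall>x u. \<bar>u\<bar> > s \<longrightarrow> q x (x + u) = 0"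
    and a_pos: "a > 0"
    and n_pos: "n \<ge> 1"
  shows "\<exists>K. compact_op_L2 \<pi> K \<and>
    (\<forall>f. L2 \<pi> f \<longrightarrow>
      (AE x in piM \<pi>.
         (mh_P \<pi> q ^^ n) f x
         = K f x + (restr_in a (mh_R \<pi> q) ^^ n) f x
           + ((\<lambda>g y. restr_out a (mh_R \<pi> q) g y + restr_out a (mh_T \<pi> q) g y) ^^ n) f x))"
proof -
  obtain Mq where Mq: "\<forall>x y. q x y \<le> Mq" using q_bdd by blast
  obtain s where s: "s > 0" "\<forall>x u. \<bar>u\<bar> > s \<longrightarrow> q x (x + u) = 0" using q_supp by blast
  interpret mha \<pi> q Mq s a
    by unfold_locales (use pi_pos pi_cont pi_int q_nonneg q_cont q_int q_one a_pos Mq s in auto)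
  obtain m where n: "n = Suc m" using n_pos by (cases n) auto
  show ?thesis
  proof (intro exI conjI allI impI)
    show "compact_op_L2 \<pi> (Kn n)" using Kn_cop n by simp
    fix f assume "L2 \<pi> f"
    show "AE x in piM \<pi>. (mh_P \<pi> q ^^ n) f x
         = Kn n f x + (restr_in a (mh_R \<pi> q) ^^ n) f x
           + ((\<lambda>g y. restr_out a (mh_R \<pi> q) g y + restr_out a (mh_T \<pi> q) g y) ^^ n) f x"
      by (intro AE_I2) (simp add: Kn_def)
  qed
qed

end
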